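(* Let $f=z(z+\alpha)$ and $A=A(f)$. (1) If $\alpha=0$, every graded simple right $A$-module is isomorphic in $\operatorname{gr}A$ to exactly one of: $X\langle n\rangle$ ($n\in\mathbb{Z}$), $Y\langle n\rangle$ ($n\in\mathbb{Z}$), or $M_\lambda$ ($\lambda\in\Bbbk\setminus\mathbb{Z}$), where $X=A/(xA+zA)$, $Y=(A/(yA+(z-1)A))\langle 1\rangle$, $M_\lambda=A/(z+\lambda)A$. (2) If $\alpha\in\mathbb{Z}_{>0}$, every graded simple right $A$-module is isomorphic to exactly one of: $X\langle n\rangle$, $Y\langle n\rangle$, $Z\langle n\rangle$ ($n\in\mathbb{Z}$), or $M_\lambda$ ($\lambda\in\Bbbk\setminus\mathbb{Z}$), where $X=(A/(xA+(z+\alpha)A))\langle-\alpha\rangle$, $Y=(A/(yA+(z-1)A))\langle1\rangle$, $Z=A/(y^\alpha A+xA+zA)$, $M_\lambda=A/(z+\lambda)A$. (3) If $\alpha\in\Bbbk\setminus\mathbb{Z}$, every graded simple right $A$-module is isomorphic to exactly one of: $X_0\langle n\rangle$, $Y_0\langle n\rangle$, $X_\alpha\langle n\rangle$, $Y_\alpha\langle n\rangle$ ($n\in\mathbb{Z}$), or $M_\lambda$ ($\lambda\in\Bbbk\setminus(\mathbb{Z}\cup(\mathbb{Z}+\alpha))$), where $X_0=A/(xA+zA)$, $Y_0=(A/(yA+(z-1)A))\langle1\rangle$, $X_\alpha=A/(xA+(z+\alpha)A)$, $Y_\alpha=(A/(yA+(z+\alpha-1)A))\langle1\rangle$, $M_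\lambda=A/(z+\lambda)A$.
   Context: $\Bbbk$ is an algebraically closed field of characteristic $0$. Let $\sigma$ be the automorphism of $\Bbbk[z]$ with $\sigma(z)=z+1$. For $\alpha\in\Bbbk$, $f=z(z+\alpha)$ and $A=A(f)$ is the $\Bbbk$-algebra generated by $\Bbbk[z]$, $x$, $y$ with relations $xz=(z+1)x$, $yz=(z-1)y$, $xy=f$, $yx=\sigma^{-1}(f)=(z-1)(z+\alpha-1)$, graded by $\deg x=1,\deg y=-1,\deg z=0$. $\operatorname{gr}A$ is the category of finitely generated $\mathbb{Z}$-graded right $A$-modules with degree-$0$ homomorphisms. For a graded module $M$ the shift $M\langle i\rangle$ is defined by $M\langle i\rangle_j=M_{j-i}$. *)

theory Defs
  imports "HOL-Computational_Algebra.Polynomial"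
begin

text \<open>We realize A = A(f) through its standard graded normal form:
  A = (direct sum over d in Z) of A_d, with A_d = k[z] w_d, where w_d = x^d for d >= 0
  and w_d = y^(-d) for d < 0.  The homogeneous element p(z) w_d is represented by the pair
  (d, p).  The product is  (p w_d)(q w_e) = p * sigma^d(q) * wprod d e * w_(d+e),
  where w_d w_e = wprod d e * w_(d+e) is computed from xz=(z+1)x, yz=(z-1)y, xy=f,
  yx=sigma^(-1)(f).\<close>

definition shiftp :: "int \<Rightarrow> 'k::comm_ring_1 poly \<Rightarrow> 'k poly" where
  "shiftp i p = pcompose p [:of_int i, 1:]"   \<comment> \<open>sigma^i(p)(z) = p(z+i)\<close>

definition fpoly :: "'k::comm_ring_1 \<Rightarrow> 'k poly" where
  "fpoly \<alpha> = [:0, \<alpha>, 1:]"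

definition wprod :: "'k::comm_ring_1 \<Rightarrow> int \<Rightarrow> int \<Rightarrow> 'k poly" where
  "wprod \<alpha> d e =
     (if 0 < d \<and> e < 0 then (\<Prod>i\<in>{d - min d (-e) .. d - 1}. shiftp i (fpoly \<alpha>))
      else if d < 0 \<and> 0 < e then (\<Prod>i\<in>{(-d) - min (-d) e + 1 .. -d}. shiftp (-i) (fpoly \<alpha>))
      else 1)"

definition hprod :: "'k::comm_ring_1 \<Rightarrow> int \<Rightarrow> 'k poly \<Rightarrow> int \<Rightarrow> 'k poly \<Rightarrow> 'k poly" where
  "hprod \<alpha> d p e q = p * shiftp d q * wprod \<alpha> d e"

text \<open>A graded right A-module M is given by its homogeneous components M_j (j in Z),
  each a k-vector space, together with the right action of homogeneous elements:
  gact j m d p = m * (p w_d) in M_(j+d) for m in M_j.\<close>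

record ('k, 'p, 'm) gmod_raw =
  gcarr :: "int \<Rightarrow> 'm set"
  gzero :: "int \<Rightarrow> 'm"
  gadd  :: "int \<Rightarrow> 'm \<Rightarrow> 'm \<Rightarrow> 'm"
  gsmul :: "int \<Rightarrow> 'k \<Rightarrow> 'm \<Rightarrow> 'm"
  gact  :: "int \<Rightarrow> 'm \<Rightarrow> int \<Rightarrow> 'p \<Rightarrow> 'm"

text \<open>The acting elements are the coefficient polynomials in k[z] of homogeneous elements.\<close>
type_synonym ('k, 'm) gmod = "('k, 'k poly, 'm) gmod_raw"

definition component_vs :: "('k::field, 'k poly, 'm, 'b) gmod_raw_scheme \<Rightarrow> int \<Rightarrow> bool" where
  "component_vs M j \<longleftrightarrow>
     (let C = gcarr M j; z = gzero M j; ad = gadd M j; sm = gsmul M j in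
      z \<in> C \<and> (\<forall>a\<in>C. \<forall>b\<in>C. ad a b \<in> C) \<and> (\<forall>c. \<forall>a\<in>C. sm c a \<in> C) \<and>
      (\<forall>a\<in>C. \<forall>b\<in>C. \<forall>e\<in>C. ad (ad a b) e = ad a (ad b e)) \<and>
      (\<forall>a\<in>C. \<forall>b\<in>C. ad a b = ad b a) \<and>
      (\<forall>a\<in>C. ad z a = a) \<and>
      (\<forall>a\<in>C. \<exists>b\<in>C. ad a b = z) \<and>
      (\<forall>c. \<forall>a\<in>C. \<forall>b\<in>C. sm c (ad a b) = ad (sm c a) (sm c b)) \<and>
      (\<forall>c c'. \<forall>a\<in>C. sm (c + c') a = ad (sm c a) (sm c' a)) \<and>
      (\<forall>c c'. \<forall>a\<in>C. sm (c * c') a = sm c (sm c' a)) \<and>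
      (\<forall>a\<in>C. sm 1 a = a))"

definition is_gmod :: "'k::field \<Rightarrow> ('k, 'k poly, 'm, 'b) gmod_raw_scheme \<Rightarrow> bool" where
  "is_gmod \<alpha> M \<longleftrightarrow>
     (\<forall>j. component_vs M j) \<and>
     (\<forall>j d p. \<forall>m\<in>gcarr M j. gact M j m d p \<in> gcarr M (j + d)) \<and>
     (\<forall>j d p. \<forall>a\<in>gcarr M j. \<forall>b\<in>gcarr M j.
         gact M j (gadd M j a b) d p = gadd M (j + d) (gact M j a d p) (gact M j b d p)) \<and>
     (\<forall>j d p c. \<forall>a\<in>gcarr M j.
         gact M j (gsmul M j c a) d p = gsmul M (j + d) c (gact M j a d p)) \<and>
     (\<forall>j d p q. \<forall>a\<in>gcarr M j.
         gact M j a d (p + q) = gadd M (j + d) (gact M j a d p) (gact M j a d q)) \<and>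
     (\<forall>j d p c. \<forall>a\<in>gcarr M j.
         gact M j a d (smult c p) = gsmul M (j + d) c (gact M j a d p)) \<and>
     (\<forall>j. \<forall>a\<in>gcarr M j. gact M j a 0 1 = a) \<and>
     (\<forall>j d p e q. \<forall>a\<in>gcarr M j.
         gact M (j + d) (gact M j a d p) e q = gact M j a (d + e) (hprod \<alpha> d p e q))"

definition is_gsubmod :: "('k::field, 'k poly, 'm, 'b) gmod_raw_scheme \<Rightarrow> (int \<Rightarrow> 'm set) \<Rightarrow> bool" where
  "is_gsubmod M N \<longleftrightarrow>
     (\<forall>j. N j \<subseteq> gcarr M j \<and> gzero M j \<in> N j \<and>
          (\<forall>a\<in>N j. \<forall>b\<in>N j. gadd M j a b \<in> N j) \<and>
          (\<forall>c. \<forall>a\<in>N j. gsmul M j c a \<in> N j) \<and>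
          (\<forall>d p. \<forall>a\<in>N j. gact M j a d p \<in> N (j + d)))"

definition fin_gen :: "('k::field, 'k poly, 'm, 'b) gmod_raw_scheme \<Rightarrow> bool" where
  "fin_gen M \<longleftrightarrow>
     (\<exists>G. finite G \<and> (\<forall>(j, m)\<in>G. m \<in> gcarr M j) \<and>
          (\<forall>N. is_gsubmod M N \<and> (\<forall>(j, m)\<in>G. m \<in> N j) \<longrightarrow> (\<forall>j. N j = gcarr M j)))"

definition gr_simple :: "'k::field \<Rightarrow> ('k, 'k poly, 'm, 'b) gmod_raw_scheme \<Rightarrow> bool" where
  "gr_simple \<alpha> M \<longleftrightarrow>
     is_gmod \<alpha> M \<and> fin_gen M \<and> (\<exists>j. gcarr M j \<noteq> {gzero M j}) \<and>
     (\<forall>N. is_gsubmod M N \<longrightarrow> (\<forall>j. N j = {gzero M j}) \<or> (\<forall>j. N j = gcarr M j))"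

definition gr_iso :: "('k::field, 'k poly, 'm, 'b) gmod_raw_scheme \<Rightarrow> ('k, 'k poly, 'n, 'c) gmod_raw_scheme \<Rightarrow> bool" where
  "gr_iso M N \<longleftrightarrow>
     (\<exists>\<phi>. (\<forall>j. bij_betw (\<phi> j) (gcarr M j) (gcarr N j)) \<and>
          (\<forall>j. \<forall>a\<in>gcarr M j. \<forall>b\<in>gcarr M j. \<phi> j (gadd M j a b) = gadd N j (\<phi> j a) (\<phi> j b)) \<and>
          (\<forall>j c. \<forall>a\<in>gcarr M j. \<phi> j (gsmul M j c a) = gsmul N j c (\<phi> j a)) \<and>
          (\<forall>j d p. \<forall>a\<in>gcarr M j. \<phi> (j + d) (gact M j a d p) = gact N j (\<phi> j a) d p))"

definition gshift :: "int \<Rightarrow> ('k, 'm) gmod \<Rightarrow> ('k, 'm) gmod" where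
  "gshift i M = \<lparr> gcarr = (\<lambda>j. gcarr M (j - i)), gzero = (\<lambda>j. gzero M (j - i)),
                  gadd = (\<lambda>j. gadd M (j - i)), gsmul = (\<lambda>j. gsmul M (j - i)),
                  gact = (\<lambda>j. gact M (j - i)) \<rparr>"

text \<open>gens is a list of homogeneous elements (d, p) = p w_d.  The degree-n component of the
  right ideal  sum_i g_i A  is  { sum_i g_i (q_i w_(n - d_i)) }, identified with a subspace of k[z].\<close>
definition ideal_comp :: "'k::field \<Rightarrow> (int \<times> 'k poly) list \<Rightarrow> int \<Rightarrow> 'k poly set" where
  "ideal_comp \<alpha> gens n =
     {(\<Sum>i<length gens. hprod \<alpha> (fst (gens ! i)) (snd (gens ! i)) (n - fst (gens ! i)) (q i)) | q. True}"

definition coset :: "'k::field \<Rightarrow> (int \<times> 'k poly) list \<Rightarrow> int \<Rightarrow> 'k poly \<Rightarrow> 'k poly set" where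
  "coset \<alpha> gens n p = {p + r | r. r \<in> ideal_comp \<alpha> gens n}"

definition rep :: "'k poly set \<Rightarrow> 'k poly" where
  "rep c = (SOME p. p \<in> c)"

definition quot_mod :: "'k::field \<Rightarrow> (int \<times> 'k poly) list \<Rightarrow> ('k, 'k poly set) gmod" where
  "quot_mod \<alpha> gens =
     \<lparr> gcarr = (\<lambda>n. {coset \<alpha> gens n p | p. True}),
       gzero = (\<lambda>n. ideal_comp \<alpha> gens n),
       gadd = (\<lambda>n a b. coset \<alpha> gens n (rep a + rep b)),
       gsmul = (\<lambda>n c a. coset \<alpha> gens n (smult c (rep a))),
       gact = (\<lambda>n a e q. coset \<alpha> gens (n + e) (hprod \<alpha> n (rep a) e q)) \<rparr>"

definition el_x :: "int \<times> 'k::comm_ring_1 poly" where "el_x = (1, 1)"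
definition el_ypow :: "nat \<Rightarrow> int \<times> 'k::comm_ring_1 poly" where "el_ypow k = (- int k, 1)"
definition el_y :: "int \<times> 'k::comm_ring_1 poly" where "el_y = el_ypow 1"
definition el_zplus :: "'k::comm_ring_1 \<Rightarrow> int \<times> 'k poly" where "el_zplus c = (0, [:c, 1:])"

definition M_lam :: "'k::field \<Rightarrow> 'k \<Rightarrow> ('k, 'k poly set) gmod" where
  "M_lam \<alpha> lam = quot_mod \<alpha> [el_zplus lam]"

definition X0 :: "'k::field \<Rightarrow> ('k, 'k poly set) gmod" where
  "X0 \<alpha> = quot_mod \<alpha> [el_x, el_zplus 0]"

definition Y0 :: "'k::field \<Rightarrow> ('k, 'k poly set) gmod" where
  "Y0 \<alpha> = gshift 1 (quot_mod \<alpha> [el_y, el_zplus (-1)])"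

definition X_pos :: "nat \<Rightarrow> ('k::field, 'k poly set) gmod" where
  "X_pos a = gshift (- int a) (quot_mod (of_nat a) [el_x, el_zplus (of_nat a)])"

definition Z_pos :: "nat \<Rightarrow> ('k::field, 'k poly set) gmod" where
  "Z_pos a = quot_mod (of_nat a) [el_ypow a, el_x, el_zplus 0]"

definition X_alpha :: "'k::field \<Rightarrow> ('k, 'k poly set) gmod" where
  "X_alpha \<alpha> = quot_mod \<alpha> [el_x, el_zplus \<alpha>]"

definition Y_alpha :: "'k::field \<Rightarrow> ('k, 'k poly set) gmod" where
  "Y_alpha \<alpha> = gshift 1 (quot_mod \<alpha> [el_y, el_zplus (\<alpha> - 1)])"

datatype 'k sidx = IX int | IY int | IZ int | IXa int | IYa int | IM 'k

definition idx1 :: "'k::field sidx set" where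
  "idx1 = range IX \<union> range IY \<union> {IM lam | lam. lam \<notin> \<int>}"

definition fam1 :: "'k::field sidx \<Rightarrow> ('k, 'k poly set) gmod" where
  "fam1 i = (case i of IX n \<Rightarrow> gshift n (X0 0) | IY n \<Rightarrow> gshift n (Y0 0)
                     | IM lam \<Rightarrow> M_lam 0 lam | _ \<Rightarrow> undefined)"

definition idx2 :: "'k::field sidx set" where
  "idx2 = range IX \<union> range IY \<union> range IZ \<union> {IM lam | lam. lam \<notin> \<int>}"

definition fam2 :: "nat \<Rightarrow> 'k::field sidx \<Rightarrow> ('k, 'k poly set) gmod" where
  "fam2 a i = (case i of IX n \<Rightarrow> gshift n (X_pos a) | IY n \<Rightarrow> gshift n (Y0 (of_nat a))
                       | IZ n \<Rightarrow> gshift n (Z_pos a) | IM lam \<Rightarrow> M_lam (of_nat a) lam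
                       | _ \<Rightarrow> undefined)"

definition idx3 :: "'k::field \<Rightarrow> 'k sidx set" where
  "idx3 \<alpha> = range IX \<union> range IY \<union> range IXa \<union> range IYa \<union>
            {IM lam | lam. lam \<notin> \<int> \<and> lam \<notin> {m + \<alpha> | m. m \<in> \<int>}}"

definition fam3 :: "'k::field \<Rightarrow> 'k sidx \<Rightarrow> ('k, 'k poly set) gmod" where
  "fam3 \<alpha> i = (case i of IX n \<Rightarrow> gshift n (X0 \<alpha>) | IY n \<Rightarrow> gshift n (Y0 \<alpha>)
                       | IXa n \<Rightarrow> gshift n (X_alpha \<alpha>) | IYa n \<Rightarrow> gshift n (Y_alpha \<alpha>)
                       | IM lam \<Rightarrow> M_lam \<alpha> lam | _ \<Rightarrow> undefined)"

end

theory Submission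
  imports Defs
begin

lemma gm_cv: "is_gmod \<alpha> M \<Longrightarrow> component_vs M j" by (simp add: is_gmod_def)

locale gmod_loc = fixes \<alpha> :: "'k::field" and M :: "('k, 'k poly, 'm, 'b) gmod_raw_scheme"
  assumes gm: "is_gmod \<alpha> M"
begin

lemma zero_in: "gzero M j \<in> gcarr M j"
  using gm_cv[OF gm, of j] unfolding component_vs_def Let_def by simp
lemma add_in: "a \<in> gcarr M j \<Longrightarrow> b \<in> gcarr M j \<Longrightarrow> gadd M j a b \<in> gcarr M j"
  using gm_cv[OF gm, of j] unfolding component_vs_def Let_def by simp
lemma smul_in: "a \<in> gcarr M j \<Longrightarrow> gsmul M j c a \<in> gcarr M j"
  using gm_cv[OF gm, of j] unfolding component_vs_def Let_def by simp
lemma add_assoc: "a \<in> gcarr M j \<Longrightarrow> b \<in> gcarr M j \<Longrightarrow> e \<in> gcarr M j \<Longrightarrow>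
   gadd M j (gadd M j a b) e = gadd M j a (gadd M j b e)"
  using gm_cv[OF gm, of j] unfolding component_vs_def Let_def by (elim conjE) (drule bspec, assumption)+
lemma add_comm: "a \<in> gcarr M j \<Longrightarrow> b \<in> gcarr M j \<Longrightarrow> gadd M j a b = gadd M j b a"
  using gm_cv[OF gm, of j] unfolding component_vs_def Let_def by (elim conjE) (drule bspec, assumption)+
lemma zero_add: "a \<in> gcarr M j \<Longrightarrow> gadd M j (gzero M j) a = a"
  using gm_cv[OF gm, of j] unfolding component_vs_def Let_def by (elim conjE) (drule bspec, assumption)+
lemma neg_ex: "a \<in> gcarr M j \<Longrightarrow> \<exists>b\<in>gcarr M j. gadd M j a b = gzero M j"
  using gm_cv[OF gm, of j] unfolding component_vs_def Let_def by (elim conjE) (drule bspec, assumption)+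
lemma smul_add: "a \<in> gcarr M j \<Longrightarrow> b \<in> gcarr M j \<Longrightarrow>
    gsmul M j c (gadd M j a b) = gadd M j (gsmul M j c a) (gsmul M j c b)"
  using gm_cv[OF gm, of j] unfolding component_vs_def Let_def by simp
lemma add_smul: "a \<in> gcarr M j \<Longrightarrow>
    gsmul M j (c + c') a = gadd M j (gsmul M j c a) (gsmul M j c' a)"
  using gm_cv[OF gm, of j] unfolding component_vs_def Let_def by simp
lemma mult_smul: "a \<in> gcarr M j \<Longrightarrow>
    gsmul M j (c * c') a = gsmul M j c (gsmul M j c' a)"
  using gm_cv[OF gm, of j] unfolding component_vs_def Let_def by simp
lemma one_smul: "a \<in> gcarr M j \<Longrightarrow> gsmul M j 1 a = a"
  using gm_cv[OF gm, of j] unfolding component_vs_def Let_def by simp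

lemma act_in: "m \<in> gcarr M j \<Longrightarrow> gact M j m d p \<in> gcarr M (j + d)"
  using gm by (simp add: is_gmod_def)
lemma add_act: "a \<in> gcarr M j \<Longrightarrow> b \<in> gcarr M j \<Longrightarrow>
   gact M j (gadd M j a b) d p = gadd M (j + d) (gact M j a d p) (gact M j b d p)"
  using gm by (simp add: is_gmod_def)
lemma smul_act: "a \<in> gcarr M j \<Longrightarrow>
   gact M j (gsmul M j c a) d p = gsmul M (j + d) c (gact M j a d p)"
  using gm by (simp add: is_gmod_def)
lemma act_padd: "a \<in> gcarr M j \<Longrightarrow>
   gact M j a d (p + q) = gadd M (j + d) (gact M j a d p) (gact M j a d q)"
  using gm by (simp add: is_gmod_def)
lemma act_smult: "a \<in> gcarr M j \<Longrightarrow>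
   gact M j a d (smult c p) = gsmul M (j + d) c (gact M j a d p)"
  using gm by (simp add: is_gmod_def)
lemma act_one: "a \<in> gcarr M j \<Longrightarrow> gact M j a 0 1 = a"
  using gm by (simp add: is_gmod_def)
lemma act_assoc: "a \<in> gcarr M j \<Longrightarrow>
   gact M (j + d) (gact M j a d p) e q = gact M j a (d + e) (hprod \<alpha> d p e q)"
  using gm by (simp add: is_gmod_def)

lemma add_zero: "a \<in> gcarr M j \<Longrightarrow> gadd M j a (gzero M j) = a"
  using add_comm zero_add zero_in by metis

lemma idem_zero: assumes a: "a \<in> gcarr M j" and h: "gadd M j a a = a" shows "a = gzero M j"
proof -
  obtain b where b: "b \<in> gcarr M j" "gadd M j a b = gzero M j" using neg_ex[OF a] by blast
  have "gadd M j (gadd M j a a) b = gzero M j" using h b by simp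
  then have "gadd M j a (gzero M j) = gzero M j" using add_assoc[OF a a b(1)] b by simp
  then show ?thesis using add_zero[OF a] by simp
qed

lemma smul_0: "a \<in> gcarr M j \<Longrightarrow> gsmul M j 0 a = gzero M j"
  using idem_zero[OF smul_in] add_smul[where c=0 and c'=0] by simp

lemma smul_zero: "gsmul M j c (gzero M j) = gzero M j"
proof -
  have "gsmul M j c (gzero M j) = gsmul M j c (gsmul M j 0 (gzero M j))"
    using smul_0[OF zero_in] by simp
  also have "\<dots> = gsmul M j 0 (gzero M j)" using mult_smul[OF zero_in, where c=c and c'=0] by simp
  finally show ?thesis using smul_0[OF zero_in] by simp
qed

lemma smul_eq_zero: assumes a: "a \<in> gcarr M j" and c: "c \<noteq> 0" and h: "gsmul M j c a = gzero M j"
  shows "a = gzero M j"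
proof -
  have "a = gsmul M j (inverse c * c) a" using c one_smul[OF a] by simp
  also have "\<dots> = gsmul M j (inverse c) (gsmul M j c a)" using mult_smul[OF a] by simp
  finally show ?thesis using h smul_zero by simp
qed

lemma neg_self: "b \<in> gcarr M j \<Longrightarrow> gadd M j b (gsmul M j (-1) b) = gzero M j"
  using add_smul[where c=1 and c'="-1"] one_smul smul_0 by simp

lemma sub_eq: assumes a: "a \<in> gcarr M j" and b: "b \<in> gcarr M j"
  and h: "gadd M j a (gsmul M j (-1) b) = gzero M j" shows "a = b"
proof -
  have nb: "gsmul M j (-1) b \<in> gcarr M j" using smul_in[OF b] .
  have "a = gadd M j a (gadd M j (gsmul M j (-1) b) b)"
    using neg_self[OF b] add_comm[OF b nb] add_zero[OF a] by simp
  also have "\<dots> = gadd M j (gzero M j) b" using add_assoc[OF a nb b] h by simp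
  finally show ?thesis using zero_add[OF b] by simp
qed

lemma act_p0: "a \<in> gcarr M j \<Longrightarrow> gact M j a d 0 = gzero M (j + d)"
  using act_smult[where c=0 and p=1] smul_0[OF act_in] by simp

lemma act_zero: "gact M j (gzero M j) d p = gzero M (j + d)"
proof -
  have "gact M j (gzero M j) d p = gact M j (gsmul M j 0 (gzero M j)) d p"
    using smul_0[OF zero_in] by simp
  also have "\<dots> = gzero M (j + d)" using smul_act[OF zero_in] smul_0[OF act_in[OF zero_in]] by simp
  finally show ?thesis .
qed

lemma act_diff: assumes a: "a \<in> gcarr M j"
  shows "gact M j a d (p - q) = gadd M (j + d) (gact M j a d p) (gsmul M (j + d) (-1) (gact M j a d q))"
proof -
  have "p - q = p + smult (-1) q" by simp
  then show ?thesis using act_padd[OF a] act_smult[OF a] by metis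
qed

lemma act_eq_iff: assumes a: "a \<in> gcarr M j"
  shows "gact M j a d p = gact M j a d q \<longleftrightarrow> gact M j a d (p - q) = gzero M (j + d)"
  using act_diff[OF a] sub_eq[OF act_in[OF a] act_in[OF a]] neg_self[OF act_in[OF a]] by metis

end

lemma shiftp_0[simp]: "shiftp 0 p = p" by (simp add: shiftp_def)
lemma shiftp_const[simp]: "shiftp i [:a:] = [:a:]" by (simp add: shiftp_def)
lemma shiftp_1[simp]: "shiftp i 1 = 1" by (metis shiftp_const one_pCons)
lemma poly_shiftp[simp]: "poly (shiftp i p) x = poly p (x + of_int i)"
  by (simp add: shiftp_def poly_pcompose algebra_simps)
lemma poly_fpoly[simp]: "poly (fpoly \<alpha>) x = x * (x + \<alpha>)" by (simp add: fpoly_def algebra_simps)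
lemma wprod_pp: "0 \<le> d \<Longrightarrow> 0 \<le> e \<Longrightarrow> wprod \<alpha> d e = 1" by (simp add: wprod_def)
lemma wprod_nn: "d \<le> 0 \<Longrightarrow> e \<le> 0 \<Longrightarrow> wprod \<alpha> d e = 1" by (simp add: wprod_def)
lemma wprod_0L[simp]: "wprod \<alpha> 0 e = 1" by (simp add: wprod_def)
lemma wprod_0R[simp]: "wprod \<alpha> d 0 = 1" by (simp add: wprod_def)
lemma hprod_0L[simp]: "hprod \<alpha> 0 p e q = p * q" by (simp add: hprod_def)
lemma hprod_0R[simp]: "hprod \<alpha> d p 0 q = p * shiftp d q" by (simp add: hprod_def)

lemma wprod_up: "0 \<le> d \<Longrightarrow> wprod \<alpha> (d + 1) (-1) = shiftp d (fpoly \<alpha>)"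
proof -
  assume "0 \<le> d"
  then have "{d + 1 - min (d + 1) (- (-1)) .. d + 1 - 1} = {d}" by auto
  then show ?thesis using \<open>0 \<le> d\<close> by (simp add: wprod_def)
qed

lemma wprod_down: "d \<le> 0 \<Longrightarrow> wprod \<alpha> (d - 1) 1 = shiftp (d - 1) (fpoly \<alpha>)"
proof -
  assume "d \<le> 0"
  then have "{- (d - 1) - min (- (d - 1)) 1 + 1 .. - (d - 1)} = {1 - d}" by auto
  then show ?thesis using \<open>d \<le> 0\<close> by (simp add: wprod_def)
qed

lemma poly_wprod_pos: "0 < d \<Longrightarrow> poly (wprod \<alpha> d (-d)) c = (\<Prod>i\<in>{0..d-1}. poly (fpoly \<alpha>) (c + of_int i))"
  by (simp add: wprod_def poly_prod)

lemma poly_wprod_neg: "d < 0 \<Longrightarrow> poly (wprod \<alpha> d (-d)) c = (\<Prod>i\<in>{1..-d}. poly (fpoly \<alpha>) (c - of_int i))"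
  by (simp add: wprod_def poly_prod)

definition inS :: "'k::comm_ring_1 \<Rightarrow> 'k \<Rightarrow> int \<Rightarrow> bool" where
  "inS \<alpha> c d \<longleftrightarrow> (\<forall>i::int. ((0 \<le> i \<and> i < d) \<or> (d \<le> i \<and> i < 0)) \<longrightarrow> poly (fpoly \<alpha>) (c + of_int i) \<noteq> 0)"

locale simple_loc = gmod_loc \<alpha> M for \<alpha> :: "'k::{alg_closed_field,field_char_0}"
  and M :: "('k, 'k poly, 'm, 'b) gmod_raw_scheme" +
  assumes sim: "gr_simple \<alpha> M"
begin

lemma nonzero_ex: "\<exists>j m. m \<in> gcarr M j \<and> m \<noteq> gzero M j"
  using sim zero_in unfolding gr_simple_def by blast

lemma cyclic:
  assumes v: "v \<in> gcarr M j" "v \<noteq> gzero M j" and w: "w \<in> gcarr M n"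
  shows "\<exists>p. w = gact M j v (n - j) p"
proof -
  define N where "N = (\<lambda>n. {gact M j v (n - j) p | p. True})"
  have sub: "is_gsubmod M N"
    unfolding is_gsubmod_def
  proof (intro allI conjI ballI)
    fix n
    show "N n \<subseteq> gcarr M n" unfolding N_def using act_in[OF v(1), of "n - j"] by auto
    have "gzero M n = gact M j v (n - j) 0" using act_p0[OF v(1), of "n - j"] by simp
    then show "gzero M n \<in> N n" unfolding N_def by blast
    fix a b assume "a \<in> N n" "b \<in> N n"
    then obtain p q where "a = gact M j v (n - j) p" "b = gact M j v (n - j) q" unfolding N_def by blast
    then have "gadd M n a b = gact M j v (n - j) (p + q)" using act_padd[OF v(1), of "n - j" p q] by simp
    then show "gadd M n a b \<in> N n" unfolding N_def by blast
  next
    fix n c a assume "a \<in> N n"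
    then obtain p where "a = gact M j v (n - j) p" unfolding N_def by blast
    then have "gsmul M n c a = gact M j v (n - j) (smult c p)" using act_smult[OF v(1), of "n - j" c p] by simp
    then show "gsmul M n c a \<in> N n" unfolding N_def by blast
  next
    fix n d p a assume "a \<in> N n"
    then obtain q where a: "a = gact M j v (n - j) q" unfolding N_def by blast
    have "gact M n a d p = gact M j v (n - j + d) (hprod \<alpha> (n - j) q d p)"
      using act_assoc[OF v(1), of "n - j" q d p] a by simp
    moreover have "n - j + d = n + d - j" by simp
    ultimately show "gact M n a d p \<in> N (n + d)" unfolding N_def by (metis (mono_tags, lifting) mem_Collect_eq)
  qed
  have "v = gact M j v (j - j) 1" using act_one[OF v(1)] by simp
  then have "v \<in> N j" unfolding N_def by blast
  then have "\<not> (\<forall>j. N j = {gzero M j})" using v(2) by blast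
  then have "\<forall>j. N j = gcarr M j" using sim sub unfolding gr_simple_def by blast
  then show ?thesis using w unfolding N_def by blast
qed

end

context simple_loc begin

lemma ann_mult: assumes m: "m \<in> gcarr M j" and h: "gact M j m d p = gzero M (j + d)"
  shows "gact M j m (d + e) (hprod \<alpha> d p e q) = gzero M (j + (d + e))"
  using act_assoc[OF m, of d p e q] h act_zero[of "j + d" e q] by (simp add: add.assoc)

lemma max0: assumes m: "m \<in> gcarr M j" "m \<noteq> gzero M j" and h: "gact M j m 0 h \<noteq> gzero M j"
  shows "\<exists>q. gact M j m 0 (1 - h * q) = gzero M j"
proof -
  have v: "gact M j m 0 h \<in> gcarr M j" using act_in[OF m(1), of 0 h] by simp
  obtain p where p: "m = gact M j (gact M j m 0 h) (j - j) p" using cyclic[OF v h m(1)] by blast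
  have "gact M j (gact M j m 0 h) 0 p = gact M j m 0 (h * p)"
    using act_assoc[OF m(1), of 0 h 0 p] by simp
  then have "gact M j m 0 1 = gact M j m 0 (h * p)" using p act_one[OF m(1)] by simp
  then show ?thesis using act_eq_iff[OF m(1)] by auto
qed

lemma eigen_ex: assumes m: "m \<in> gcarr M j" "m \<noteq> gzero M j"
  shows "\<exists>c. gact M j m 0 [:-c, 1:] = gzero M j"
proof -
  define Ann where "Ann = {p. gact M j m 0 p = gzero M j}"
  have A_add: "p + q \<in> Ann" if "p \<in> Ann" "q \<in> Ann" for p q
    using that act_padd[OF m(1), of 0 p q] zero_add[OF zero_in] unfolding Ann_def by simp
  have A_mult: "p * q \<in> Ann" if "p \<in> Ann" for p q
    using that ann_mult[OF m(1), of 0 p 0 q] unfolding Ann_def by simp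
  have A_smult: "smult c p \<in> Ann" if "p \<in> Ann" for p c
    using that act_smult[OF m(1), of 0 c p] smul_zero unfolding Ann_def by simp
  have one: "1 \<notin> Ann" using act_one[OF m(1)] m(2) unfolding Ann_def by simp
  have ex: "\<exists>g\<in>Ann. g \<noteq> 0"
  proof (rule ccontr)
    assume "\<not> ?thesis"
    then have all0: "\<forall>g\<in>Ann. g = 0" by blast
    have "gact M j m 0 [:0, 1:] \<noteq> gzero M j" using all0 unfolding Ann_def by auto
    then obtain q where "1 - [:0, 1:] * q \<in> Ann" using max0[OF m] unfolding Ann_def by blast
    then have "1 - [:0, 1:] * q = 0" using all0 by blast
    then have "poly (1 - [:0, 1:] * q) 0 = 0" by simp
    then show False by simp
  qed
  define P where "P = (\<lambda>n. \<exists>g\<in>Ann. g \<noteq> 0 \<and> degree g = n)"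
  have "P (LEAST n. P n)" using ex LeastI_ex[of P] unfolding P_def by blast
  then obtain g where g: "g \<in> Ann" "g \<noteq> 0" "degree g = (LEAST n. P n)" unfolding P_def by blast
  have gmin: "h \<notin> Ann" if "h \<noteq> 0" "degree h < degree g" for h
  proof
    assume "h \<in> Ann"
    then have "P (degree h)" unfolding P_def using that by blast
    moreover have "\<not> P (degree h)" using not_less_Least[of "degree h" P] that g(3) by simp
    ultimately show False by blast
  qed
  have "degree g \<noteq> 0"
  proof
    assume "degree g = 0"
    then have gc: "g = [:coeff g 0:]" using degree_0_id by metis
    then have "coeff g 0 \<noteq> 0" using g(2) by (metis pCons_0_0)
    then have "smult (inverse (coeff g 0)) g = 1" by (subst gc) (simp add: one_pCons)
    then show False using A_smult[OF g(1)] one by metis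
  qed
  then obtain c where "poly g c = 0" using alg_closed_imp_poly_has_root by blast
  then obtain h where gh: "g = [:-c, 1:] * h" using poly_eq_0_iff_dvd by (metis dvdE)
  have h0: "h \<noteq> 0" using g(2) gh by auto
  have "degree g = degree h + 1" using gh h0 degree_mult_eq[of "[:-c,1:]" h] by simp
  then have "h \<notin> Ann" using gmin h0 by simp
  then obtain q where q: "1 - h * q \<in> Ann" using max0[OF m] unfolding Ann_def by blast
  have gen: "\<And>X::'k poly. X = (1 - h * q) * X + (X * h) * q" by (simp add: algebra_simps)
  have "[:-c, 1:] = (1 - h * q) * [:-c, 1:] + g * q" unfolding gh by (rule gen)
  also have "\<dots> \<in> Ann" using A_add A_mult q g(1) by blast
  finally show ?thesis unfolding Ann_def by blast
qed

lemma eigen_formula: assumes m: "m \<in> gcarr M j" and e: "gact M j m 0 [:-c, 1:] = gzero M j"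
  shows "gact M j m 0 p = gsmul M j (poly p c) m"
proof -
  have "poly (p - [:poly p c:]) c = 0" by simp
  then obtain s where s: "p - [:poly p c:] = [:-c, 1:] * s" using poly_eq_0_iff_dvd by (metis dvdE)
  have pe: "p = [:-c, 1:] * s + smult (poly p c) 1" using s by (simp add: algebra_simps one_pCons)
  have z: "gact M j m 0 ([:-c, 1:] * s) = gzero M j" using ann_mult[OF m, of 0 "[:-c,1:]" 0 s] e by simp
  have "gact M j m 0 p = gadd M j (gact M j m 0 ([:-c, 1:] * s)) (gact M j m 0 (smult (poly p c) 1))"
    using act_padd[OF m, of 0] pe by (metis add_0_right)
  also have "\<dots> = gsmul M j (poly p c) m" using z act_smult[OF m, of 0 "poly p c" 1] act_one[OF m]
      zero_add[OF smul_in[OF m]] by simp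
  finally show ?thesis .
qed

lemma step2: assumes m: "m \<in> gcarr M j" and e: "gact M j m 0 [:-c, 1:] = gzero M j"
  shows "gact M j m d p = gsmul M (j + d) (poly p c) (gact M j m d 1)"
proof -
  have "gact M j m d p = gact M j (gact M j m 0 p) d 1" using act_assoc[OF m, of 0 p d 1] by simp
  also have "\<dots> = gsmul M (j + d) (poly p c) (gact M j m d 1)"
    using eigen_formula[OF m e] smul_act[OF m] by simp
  finally show ?thesis .
qed

lemma u_eigen: assumes m: "m \<in> gcarr M j" and e: "gact M j m 0 [:-c, 1:] = gzero M j"
  shows "gact M (j + d) (gact M j m d 1) 0 q = gsmul M (j + d) (poly q (c + of_int d)) (gact M j m d 1)"
  using act_assoc[OF m, of d 1 0 q] step2[OF m e, of d "shiftp d q"] by simp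

lemma u_eigen0: assumes m: "m \<in> gcarr M j" and e: "gact M j m 0 [:-c, 1:] = gzero M j"
  shows "gact M (j + d) (gact M j m d 1) 0 [:-(c + of_int d), 1:] = gzero M (j + d)"
  using u_eigen[OF m e, of d] smul_0[OF act_in[OF m]] by simp

end

lemma inS_0: "inS \<alpha> c 0" unfolding inS_def by auto

lemma range_up: fixes n :: int assumes "0 \<le> n"
  shows "(\<forall>i. (0 \<le> i \<and> i < n + 1 \<or> n + 1 \<le> i \<and> i < 0) \<longrightarrow> Q i) \<longleftrightarrow>
         (\<forall>i. (0 \<le> i \<and> i < n \<or> n \<le> i \<and> i < 0) \<longrightarrow> Q i) \<and> Q n"
proof
  assume h: "\<forall>i. (0 \<le> i \<and> i < n + 1 \<or> n + 1 \<le> i \<and> i < 0) \<longrightarrow> Q i"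
  have "Q n" using h assms by auto
  moreover have "\<forall>i. (0 \<le> i \<and> i < n \<or> n \<le> i \<and> i < 0) \<longrightarrow> Q i" using h assms by auto
  ultimately show "(\<forall>i. (0 \<le> i \<and> i < n \<or> n \<le> i \<and> i < 0) \<longrightarrow> Q i) \<and> Q n" by blast
next
  assume h: "(\<forall>i. (0 \<le> i \<and> i < n \<or> n \<le> i \<and> i < 0) \<longrightarrow> Q i) \<and> Q n"
  show "\<forall>i. (0 \<le> i \<and> i < n + 1 \<or> n + 1 \<le> i \<and> i < 0) \<longrightarrow> Q i"
  proof (intro allI impI)
    fix i assume i: "0 \<le> i \<and> i < n + 1 \<or> n + 1 \<le> i \<and> i < 0"
    show "Q i"
    proof (cases "i = n")
      case True then show ?thesis using h by simp
    next
      case False then have "0 \<le> i \<and> i < n" using i assms by auto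
      then show ?thesis using h by blast
    qed
  qed
qed

lemma range_down: fixes n :: int assumes "n \<le> 0"
  shows "(\<forall>i. (0 \<le> i \<and> i < n - 1 \<or> n - 1 \<le> i \<and> i < 0) \<longrightarrow> Q i) \<longleftrightarrow>
         (\<forall>i. (0 \<le> i \<and> i < n \<or> n \<le> i \<and> i < 0) \<longrightarrow> Q i) \<and> Q (n - 1)"
proof
  assume h: "\<forall>i. (0 \<le> i \<and> i < n - 1 \<or> n - 1 \<le> i \<and> i < 0) \<longrightarrow> Q i"
  have "Q (n - 1)" using h assms by auto
  moreover have "\<forall>i. (0 \<le> i \<and> i < n \<or> n \<le> i \<and> i < 0) \<longrightarrow> Q i" using h assms by auto
  ultimately show "(\<forall>i. (0 \<le> i \<and> i < n \<or> n \<le> i \<and> i < 0) \<longrightarrow> Q i) \<and> Q (n - 1)" by blast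
next
  assume h: "(\<forall>i. (0 \<le> i \<and> i < n \<or> n \<le> i \<and> i < 0) \<longrightarrow> Q i) \<and> Q (n - 1)"
  show "\<forall>i. (0 \<le> i \<and> i < n - 1 \<or> n - 1 \<le> i \<and> i < 0) \<longrightarrow> Q i"
  proof (intro allI impI)
    fix i assume i: "0 \<le> i \<and> i < n - 1 \<or> n - 1 \<le> i \<and> i < 0"
    show "Q i"
    proof (cases "i = n - 1")
      case True then show ?thesis using h by simp
    next
      case False then have "n \<le> i \<and> i < 0" using i assms by auto
      then show ?thesis using h by blast
    qed
  qed
qed

lemma inS_up: "inS \<alpha> c (int n + 1) \<longleftrightarrow> inS \<alpha> c (int n) \<and> poly (fpoly \<alpha>) (c + of_int (int n)) \<noteq> 0"
  unfolding inS_def by (rule range_up) simp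

lemma inS_down: "inS \<alpha> c (- int n - 1) \<longleftrightarrow> inS \<alpha> c (- int n) \<and> poly (fpoly \<alpha>) (c + of_int (- int n - 1)) \<noteq> 0"
  unfolding inS_def by (rule range_down) simp

context simple_loc begin

context fixes m j c
  assumes m: "m \<in> gcarr M j" "m \<noteq> gzero M j" and e: "gact M j m 0 [:-c, 1:] = gzero M j"
begin

abbreviation "u d \<equiv> gact M j m d 1"

lemma u_in: "u d \<in> gcarr M (j + d)" using act_in[OF m(1)] .

lemma up: "0 \<le> d \<Longrightarrow> gact M (j + d) (u d) 1 1 = u (d + 1)"
  using act_assoc[OF m(1), of d 1 1 1] by (simp add: hprod_def wprod_pp)

lemma upback: "0 \<le> d \<Longrightarrow> gact M (j + (d + 1)) (u (d + 1)) (-1) 1 = gsmul M (j + d) (poly (fpoly \<alpha>) (c + of_int d)) (u d)"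
  using act_assoc[OF m(1), of "d + 1" 1 "-1" 1] step2[OF m(1) e, of d "shiftp d (fpoly \<alpha>)"]
  by (simp add: hprod_def wprod_up add.assoc)

lemma down: "d \<le> 0 \<Longrightarrow> gact M (j + d) (u d) (-1) 1 = u (d - 1)"
  using act_assoc[OF m(1), of d 1 "-1" 1] by (simp add: hprod_def wprod_nn)

lemma downback: "d \<le> 0 \<Longrightarrow> gact M (j + (d - 1)) (u (d - 1)) 1 1 = gsmul M (j + d) (poly (fpoly \<alpha>) (c + of_int (d - 1))) (u d)"
  using act_assoc[OF m(1), of "d - 1" 1 1 1] step2[OF m(1) e, of d "shiftp (d - 1) (fpoly \<alpha>)"]
  by (simp add: hprod_def wprod_down)

lemma wprod_nz: assumes "u d \<noteq> gzero M (j + d)" shows "poly (wprod \<alpha> d (-d)) c \<noteq> 0"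
proof
  assume h: "poly (wprod \<alpha> d (-d)) c = 0"
  obtain q where q: "m = gact M (j + d) (u d) (j - (j + d)) q" using cyclic[OF u_in assms m(1)] by blast
  have "gact M (j + d) (u d) (-d) q = gact M j m 0 (shiftp d q * wprod \<alpha> d (-d))"
    using act_assoc[OF m(1), of d 1 "-d" q] by (simp add: hprod_def)
  also have "\<dots> = gzero M j" using eigen_formula[OF m(1) e] h smul_0[OF m(1)] by simp
  finally show False using q m(2) by simp
qed

lemma charac_pos: "u (int n) \<noteq> gzero M (j + int n) \<longleftrightarrow> inS \<alpha> c (int n)"
proof (induction n)
  case 0 then show ?case using act_one[OF m(1)] m(2) inS_0 by simp
next
  case (Suc n)
  have L: "u (int n + 1) \<noteq> gzero M (j + (int n + 1)) \<longleftrightarrow>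
      u (int n) \<noteq> gzero M (j + int n) \<and> poly (fpoly \<alpha>) (c + of_int (int n)) \<noteq> 0"
  proof
    assume h: "u (int n + 1) \<noteq> gzero M (j + (int n + 1))"
    have "u (int n) \<noteq> gzero M (j + int n)"
    proof
      assume "u (int n) = gzero M (j + int n)"
      then have "u (int n + 1) = gzero M (j + int n + 1)" using up[of "int n"] act_zero[of "j + int n" 1 1] by simp
      then show False using h by (simp add: add.assoc)
    qed
    moreover have "poly (fpoly \<alpha>) (c + of_int (int n)) \<noteq> 0"
    proof
      assume z: "poly (fpoly \<alpha>) (c + of_int (int n)) = 0"
      have "poly (wprod \<alpha> (int n + 1) (-(int n + 1))) c = (\<Prod>i\<in>{0..int n}. poly (fpoly \<alpha>) (c + of_int i))"
        using poly_wprod_pos[of "int n + 1" \<alpha> c] by simp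
      also have "\<dots> = 0"
      proof -
        have "int n \<in> {0..int n}" by simp
        then show ?thesis using z by (meson finite_atLeastAtMost_int prod_zero_iff)
      qed
      finally show False using wprod_nz h by blast
    qed
    ultimately show "u (int n) \<noteq> gzero M (j + int n) \<and> poly (fpoly \<alpha>) (c + of_int (int n)) \<noteq> 0" by blast
  next
    assume h: "u (int n) \<noteq> gzero M (j + int n) \<and> poly (fpoly \<alpha>) (c + of_int (int n)) \<noteq> 0"
    show "u (int n + 1) \<noteq> gzero M (j + (int n + 1))"
    proof
      assume "u (int n + 1) = gzero M (j + (int n + 1))"
      then have "gsmul M (j + int n) (poly (fpoly \<alpha>) (c + of_int (int n))) (u (int n)) = gzero M (j + int n)"
        using upback[of "int n"] act_zero[of "j + (int n + 1)" "-1" 1] by simp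
      then show False using smul_eq_zero[OF u_in] h by blast
    qed
  qed
  have e1: "int (Suc n) = int n + 1" by simp
  show ?case unfolding e1 using L Suc.IH inS_up[of \<alpha> c n] by blast
qed

lemma charac_neg: "u (- int n) \<noteq> gzero M (j - int n) \<longleftrightarrow> inS \<alpha> c (- int n)"
proof (induction n)
  case 0 then show ?case using act_one[OF m(1)] m(2) inS_0 by simp
next
  case (Suc n)
  have L: "u (- int n - 1) \<noteq> gzero M (j + (- int n - 1)) \<longleftrightarrow>
      u (- int n) \<noteq> gzero M (j + - int n) \<and> poly (fpoly \<alpha>) (c + of_int (- int n - 1)) \<noteq> 0"
  proof
    assume h: "u (- int n - 1) \<noteq> gzero M (j + (- int n - 1))"
    have "u (- int n) \<noteq> gzero M (j + - int n)"
    proof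
      assume "u (- int n) = gzero M (j + - int n)"
      then have "u (- int n - 1) = gzero M (j + - int n + -1)" using down[of "- int n"] act_zero[of "j + - int n" "-1" 1] by simp
      then show False using h by (simp add: algebra_simps)
    qed
    moreover have "poly (fpoly \<alpha>) (c + of_int (- int n - 1)) \<noteq> 0"
    proof
      assume z: "poly (fpoly \<alpha>) (c + of_int (- int n - 1)) = 0"
      have eq: "{1..-(- int n - 1)} = {1..int n + 1}" by simp
      have "poly (wprod \<alpha> (- int n - 1) (-(- int n - 1))) c = (\<Prod>i\<in>{1..-(- int n - 1)}. poly (fpoly \<alpha>) (c - of_int i))"
        by (rule poly_wprod_neg) simp
      also have "\<dots> = (\<Prod>i\<in>{1..int n + 1}. poly (fpoly \<alpha>) (c - of_int i))" by (simp only: eq)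
      also have "\<dots> = 0"
      proof -
        have "int n + 1 \<in> {1..int n + 1}" by simp
        moreover have "poly (fpoly \<alpha>) (c - of_int (int n + 1)) = 0" using z by (simp add: algebra_simps)
        ultimately show ?thesis by (meson finite_atLeastAtMost_int prod_zero_iff)
      qed
      finally show False using wprod_nz h by blast
    qed
    ultimately show "u (- int n) \<noteq> gzero M (j + - int n) \<and> poly (fpoly \<alpha>) (c + of_int (- int n - 1)) \<noteq> 0" by blast
  next
    assume h: "u (- int n) \<noteq> gzero M (j + - int n) \<and> poly (fpoly \<alpha>) (c + of_int (- int n - 1)) \<noteq> 0"
    show "u (- int n - 1) \<noteq> gzero M (j + (- int n - 1))"
    proof
      assume "u (- int n - 1) = gzero M (j + (- int n - 1))"
      then have "gsmul M (j + - int n) (poly (fpoly \<alpha>) (c + of_int (- int n - 1))) (u (- int n)) = gzero M (j + - int n)"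
        using downback[of "- int n"] act_zero[of "j + (- int n - 1)" 1 1] by simp
      then show False using smul_eq_zero[OF u_in] h by blast
    qed
  qed
  have e1: "- int (Suc n) = - int n - 1" by simp
  have e2: "j - int (Suc n) = j + (- int n - 1)" by simp
  have e3: "j + - int n = j - int n" by simp
  show ?case unfolding e1 e2 using L Suc.IH inS_down[of \<alpha> c n] unfolding e3 by blast
qed

lemma charac: "u d \<noteq> gzero M (j + d) \<longleftrightarrow> inS \<alpha> c d"
proof (cases "0 \<le> d")
  case True
  then obtain n where "d = int n" by (rule nonneg_int_cases)
  then show ?thesis using charac_pos[of n] by simp
next
  case False
  then have "0 \<le> - d" by simp
  then obtain n where "- d = int n" by (rule nonneg_int_cases)
  then have "d = - int n" by simp
  then show ?thesis using charac_neg[of n] by simp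
qed

lemma ann_struct: "gact M j m d p = gzero M (j + d) \<longleftrightarrow> (\<not> inS \<alpha> c d \<or> poly p c = 0)"
proof
  assume h: "gact M j m d p = gzero M (j + d)"
  show "\<not> inS \<alpha> c d \<or> poly p c = 0"
  proof (rule ccontr)
    assume "\<not> (\<not> inS \<alpha> c d \<or> poly p c = 0)"
    then have a: "inS \<alpha> c d" "poly p c \<noteq> 0" by auto
    have "gsmul M (j + d) (poly p c) (u d) = gzero M (j + d)" using h step2[OF m(1) e, of d p] by simp
    then have "u d = gzero M (j + d)" using smul_eq_zero[OF u_in a(2)] by blast
    then show False using charac[of d] a(1) by blast
  qed
next
  assume h: "\<not> inS \<alpha> c d \<or> poly p c = 0"
  show "gact M j m d p = gzero M (j + d)"
  proof (cases "inS \<alpha> c d")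
    case True
    then have "poly p c = 0" using h by blast
    then show ?thesis using step2[OF m(1) e, of d p] smul_0[OF u_in] by simp
  next
    case False
    then have "u d = gzero M (j + d)" using charac[of d] by blast
    then show ?thesis using step2[OF m(1) e, of d p] smul_zero by simp
  qed
qed

end
end

definition subgrp :: "'k::field poly set \<Rightarrow> bool" where
  "subgrp I \<longleftrightarrow> 0 \<in> I \<and> (\<forall>p\<in>I. \<forall>q\<in>I. p + q \<in> I) \<and> (\<forall>p\<in>I. - p \<in> I)"

lemma coset_eq: assumes "subgrp (ideal_comp \<alpha> gens n)"
  shows "coset \<alpha> gens n p = coset \<alpha> gens n q \<longleftrightarrow> p - q \<in> ideal_comp \<alpha> gens n"
proof
  let ?I = "ideal_comp \<alpha> gens n"
  assume h: "coset \<alpha> gens n p = coset \<alpha> gens n q"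
  have "p \<in> coset \<alpha> gens n p" unfolding coset_def using assms unfolding subgrp_def by force
  then obtain r where "r \<in> ?I" "p = q + r" using h unfolding coset_def by blast
  then show "p - q \<in> ?I" by simp
next
  let ?I = "ideal_comp \<alpha> gens n"
  assume h: "p - q \<in> ?I"
  have h': "q - p \<in> ?I" using h assms unfolding subgrp_def by (metis minus_diff_eq)
  have "coset \<alpha> gens n a \<subseteq> coset \<alpha> gens n b" if "a - b \<in> ?I" for a b
  proof
    fix x assume "x \<in> coset \<alpha> gens n a"
    then obtain r where r: "r \<in> ?I" "x = a + r" unfolding coset_def by blast
    have "(a - b) + r \<in> ?I" using r(1) that assms unfolding subgrp_def by blast
    moreover have "x = b + ((a - b) + r)" using r by simp
    ultimately show "x \<in> coset \<alpha> gens n b" unfolding coset_def by blast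
  qed
  then show "coset \<alpha> gens n p = coset \<alpha> gens n q" using h h' by blast
qed

lemma rep_coset: assumes "subgrp (ideal_comp \<alpha> gens n)"
  shows "rep (coset \<alpha> gens n p) - p \<in> ideal_comp \<alpha> gens n"
proof -
  have "p \<in> coset \<alpha> gens n p" unfolding coset_def using assms unfolding subgrp_def by force
  then have "rep (coset \<alpha> gens n p) \<in> coset \<alpha> gens n p" unfolding rep_def by (rule someI)
  then obtain r where "r \<in> ideal_comp \<alpha> gens n" "rep (coset \<alpha> gens n p) = p + r" unfolding coset_def by blast
  then show ?thesis by simp
qed

lemma hprod_diff: "hprod \<alpha> e a d p - hprod \<alpha> e b d p = hprod \<alpha> e (a - b) d p"
  by (simp add: hprod_def algebra_simps)
lemma hprod_add: "hprod \<alpha> e a d p + hprod \<alpha> e b d p = hprod \<alpha> e (a + b) d p"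
  by (simp add: hprod_def algebra_simps)

lemma gshift_simps[simp]:
  "gcarr (gshift s Q) j = gcarr Q (j - s)" "gzero (gshift s Q) j = gzero Q (j - s)"
  "gadd (gshift s Q) j = gadd Q (j - s)" "gsmul (gshift s Q) j = gsmul Q (j - s)"
  "gact (gshift s Q) j = gact Q (j - s)"
  by (simp_all add: gshift_def)

lemma quot_simps[simp]:
  "gcarr (quot_mod \<alpha> gens) n = {coset \<alpha> gens n p | p. True}"
  "gzero (quot_mod \<alpha> gens) n = ideal_comp \<alpha> gens n"
  "gadd (quot_mod \<alpha> gens) n a b = coset \<alpha> gens n (rep a + rep b)"
  "gsmul (quot_mod \<alpha> gens) n c a = coset \<alpha> gens n (smult c (rep a))"
  "gact (quot_mod \<alpha> gens) n a e q = coset \<alpha> gens (n + e) (hprod \<alpha> n (rep a) e q)"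
  by (simp_all add: quot_mod_def)

context gmod_loc begin

lemma ann_mult': assumes m: "m \<in> gcarr M j" and h: "gact M j m d p = gzero M (j + d)"
  shows "gact M j m (d + e) (hprod \<alpha> d p e q) = gzero M (j + (d + e))"
  using act_assoc[OF m, of d p e q] h act_zero[of "j + d" e q] by (simp add: add.assoc)

lemma iso_from_ann:
  assumes m: "m \<in> gcarr M s"
    and cyc: "\<And>n w. w \<in> gcarr M n \<Longrightarrow> \<exists>p. w = gact M s m (n - s) p"
    and ann: "\<And>d. ideal_comp \<alpha> gens d = {p. gact M s m d p = gzero M (s + d)}"
  shows "gr_iso M (gshift s (quot_mod \<alpha> gens))"
proof -
  let ?I = "ideal_comp \<alpha> gens"
  have Iz: "0 \<in> ?I d" for d using ann act_p0[OF m] by simp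
  have Iadd: "p + q \<in> ?I d" if "p \<in> ?I d" "q \<in> ?I d" for p q d
    using that ann act_padd[OF m, of d p q] zero_add[OF zero_in] by simp
  have Ismult: "smult c p \<in> ?I d" if "p \<in> ?I d" for p c d
    using that ann act_smult[OF m, of d c p] smul_zero by simp
  have Ineg: "- p \<in> ?I d" if "p \<in> ?I d" for p d
    using Ismult[OF that, of "-1"] by simp
  have Ih: "hprod \<alpha> d p e q \<in> ?I (d + e)" if "p \<in> ?I d" for p d e q
    using that ann ann_mult'[OF m, of d p e q] by simp
  have SG: "subgrp (?I d)" for d unfolding subgrp_def using Iz Iadd Ineg by blast
  have ceq: "coset \<alpha> gens (n - s) p = coset \<alpha> gens (n - s) q \<longleftrightarrow> gact M s m (n - s) p = gact M s m (n - s) q" for n p q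
    using coset_eq[OF SG] act_eq_iff[OF m] ann by simp
  define pick where "pick n w = (SOME p. w = gact M s m (n - s) p)" for n w
  have pick: "w = gact M s m (n - s) (pick n w)" if "w \<in> gcarr M n" for n w
    unfolding pick_def using cyc[OF that] by (rule someI_ex)
  define \<psi> where "\<psi> n w = coset \<alpha> gens (n - s) (pick n w)" for n w
  have psi_act: "\<psi> n (gact M s m (n - s) p) = coset \<alpha> gens (n - s) p" for n p
  proof -
    have w: "gact M s m (n - s) p \<in> gcarr M n" using act_in[OF m, of "n - s" p] by simp
    show ?thesis unfolding \<psi>_def using ceq pick[OF w] by metis
  qed
  have repc: "coset \<alpha> gens d (rep (coset \<alpha> gens d p)) = coset \<alpha> gens d p" for d p
    using coset_eq[OF SG] rep_coset[OF SG] by blast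
  show ?thesis unfolding gr_iso_def
  proof (intro exI[of _ \<psi>] conjI allI ballI)
    fix n
    show "bij_betw (\<psi> n) (gcarr M n) (gcarr (gshift s (quot_mod \<alpha> gens)) n)"
      unfolding bij_betw_def
    proof
      show "inj_on (\<psi> n) (gcarr M n)"
      proof
        fix a b assume a: "a \<in> gcarr M n" and b: "b \<in> gcarr M n" and e: "\<psi> n a = \<psi> n b"
        then show "a = b" using pick[OF a] pick[OF b] ceq unfolding \<psi>_def by metis
      qed
      show "\<psi> n ` gcarr M n = gcarr (gshift s (quot_mod \<alpha> gens)) n"
      proof
        show "\<psi> n ` gcarr M n \<subseteq> gcarr (gshift s (quot_mod \<alpha> gens)) n" unfolding \<psi>_def by auto
        show "gcarr (gshift s (quot_mod \<alpha> gens)) n \<subseteq> \<psi> n ` gcarr M n"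
        proof
          fix x assume "x \<in> gcarr (gshift s (quot_mod \<alpha> gens)) n"
          then obtain p where x: "x = coset \<alpha> gens (n - s) p" by auto
          have w: "gact M s m (n - s) p \<in> gcarr M n" using act_in[OF m, of "n - s" p] by simp
          show "x \<in> \<psi> n ` gcarr M n" using psi_act[of n p] x w by (metis image_eqI)
        qed
      qed
    qed
  next
    fix n a b assume a: "a \<in> gcarr M n" and b: "b \<in> gcarr M n"
    let ?pa = "pick n a" and ?pb = "pick n b"
    have ab: "gadd M n a b = gact M s m (n - s) (?pa + ?pb)"
      using act_padd[OF m, of "n - s" ?pa ?pb] pick[OF a] pick[OF b] by simp
    have "coset \<alpha> gens (n - s) (rep (coset \<alpha> gens (n - s) ?pa) + rep (coset \<alpha> gens (n - s) ?pb))
        = coset \<alpha> gens (n - s) (?pa + ?pb)"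
    proof -
      have "(rep (coset \<alpha> gens (n - s) ?pa) + rep (coset \<alpha> gens (n - s) ?pb)) - (?pa + ?pb)
          = (rep (coset \<alpha> gens (n - s) ?pa) - ?pa) + (rep (coset \<alpha> gens (n - s) ?pb) - ?pb)" by simp
      then show ?thesis using coset_eq[OF SG] rep_coset[OF SG] Iadd by metis
    qed
    then show "\<psi> n (gadd M n a b) = gadd (gshift s (quot_mod \<alpha> gens)) n (\<psi> n a) (\<psi> n b)"
      using ab psi_act unfolding \<psi>_def[of n a] \<psi>_def[of n b] by simp
  next
    fix n c a assume a: "a \<in> gcarr M n"
    let ?pa = "pick n a"
    have ab: "gsmul M n c a = gact M s m (n - s) (smult c ?pa)"
      using act_smult[OF m, of "n - s" c ?pa] pick[OF a] by simp
    have "coset \<alpha> gens (n - s) (smult c (rep (coset \<alpha> gens (n - s) ?pa))) = coset \<alpha> gens (n - s) (smult c ?pa)"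
    proof -
      have "smult c (rep (coset \<alpha> gens (n - s) ?pa)) - smult c ?pa = smult c (rep (coset \<alpha> gens (n - s) ?pa) - ?pa)"
        by (simp add: smult_diff_right)
      then show ?thesis using coset_eq[OF SG] rep_coset[OF SG] Ismult by metis
    qed
    then show "\<psi> n (gsmul M n c a) = gsmul (gshift s (quot_mod \<alpha> gens)) n c (\<psi> n a)"
      using ab psi_act unfolding \<psi>_def[of n a] by simp
  next
    fix n d p a assume a: "a \<in> gcarr M n"
    let ?pa = "pick n a"
    have ab: "gact M n a d p = gact M s m (n + d - s) (hprod \<alpha> (n - s) ?pa d p)"
    proof -
      have "gact M n a d p = gact M (s + (n - s)) (gact M s m (n - s) ?pa) d p" using pick[OF a] by simp
      also have "\<dots> = gact M s m (n - s + d) (hprod \<alpha> (n - s) ?pa d p)" by (rule act_assoc[OF m])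
      finally show ?thesis by (simp add: algebra_simps)
    qed
    have "coset \<alpha> gens (n - s + d) (hprod \<alpha> (n - s) (rep (coset \<alpha> gens (n - s) ?pa)) d p)
        = coset \<alpha> gens (n - s + d) (hprod \<alpha> (n - s) ?pa d p)"
    proof -
      have "hprod \<alpha> (n - s) (rep (coset \<alpha> gens (n - s) ?pa)) d p - hprod \<alpha> (n - s) ?pa d p
          = hprod \<alpha> (n - s) (rep (coset \<alpha> gens (n - s) ?pa) - ?pa) d p" by (rule hprod_diff)
      then show ?thesis using coset_eq[OF SG] rep_coset[OF SG] Ih by metis
    qed
    moreover have e: "n + d - s = n - s + d" by simp
    ultimately show "\<psi> (n + d) (gact M n a d p) = gact (gshift s (quot_mod \<alpha> gens)) n (\<psi> n a) d p"
      using ab psi_act[of "n + d"] unfolding \<psi>_def[of n a] e by simp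
  qed
qed

end

lemma subgrp_if: "subgrp (if b then {p. poly p c = 0} else UNIV)"
  unfolding subgrp_def by auto

context simple_loc begin

lemma ann_from_iso:
  assumes iso: "gr_iso M (gshift s (quot_mod \<alpha> gens))"
    and I: "\<And>d. ideal_comp \<alpha> gens d = (if inS \<alpha> c d then {p. poly p c = 0} else UNIV)"
  shows "\<exists>m\<in>gcarr M s. \<forall>d p. gact M s m d p = gzero M (s + d) \<longleftrightarrow> p \<in> ideal_comp \<alpha> gens d"
proof -
  let ?F = "gshift s (quot_mod \<alpha> gens)"
  have SG: "subgrp (ideal_comp \<alpha> gens d)" for d using I subgrp_if by metis
  obtain \<phi> where bij0: "\<forall>j. bij_betw (\<phi> j) (gcarr M j) (gcarr ?F j)"
    and hsm0: "\<forall>j c'. \<forall>a\<in>gcarr M j. \<phi> j (gsmul M j c' a) = gsmul ?F j c' (\<phi> j a)"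
    and hact0: "\<forall>j d p. \<forall>a\<in>gcarr M j. \<phi> (j + d) (gact M j a d p) = gact ?F j (\<phi> j a) d p"
    using iso unfolding gr_iso_def by (elim exE conjE) blast
  have bij: "\<And>j. bij_betw (\<phi> j) (gcarr M j) (gcarr ?F j)" using bij0 by blast
  have hsm: "\<And>j c' a. a \<in> gcarr M j \<Longrightarrow> \<phi> j (gsmul M j c' a) = gsmul ?F j c' (\<phi> j a)" using hsm0 by blast
  have hact: "\<And>j d p a. a \<in> gcarr M j \<Longrightarrow> \<phi> (j + d) (gact M j a d p) = gact ?F j (\<phi> j a) d p" using hact0 by blast
  define v where "v = coset \<alpha> gens 0 1"
  have vin: "v \<in> gcarr ?F s" unfolding v_def by auto
  have surj: "\<phi> s ` gcarr M s = gcarr ?F s" using bij[of s] by (simp add: bij_betw_def)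
  define m where "m = inv_into (gcarr M s) (\<phi> s) v"
  have m: "m \<in> gcarr M s" unfolding m_def using vin surj by (metis inv_into_into)
  have pm: "\<phi> s m = v" unfolding m_def using vin surj by (metis f_inv_into_f)
  have I0: "ideal_comp \<alpha> gens 0 = {p. poly p c = 0}" using I[of 0] inS_0[of \<alpha> c] by simp
  have rv: "poly (rep v - 1) c = 0" using rep_coset[of \<alpha> gens 0 1, OF SG] I0 unfolding v_def by simp
  show ?thesis
  proof (intro bexI[OF _ m] allI)
    fix d p
    have A: "\<phi> (s + d) (gact M s m d p) = coset \<alpha> gens d p"
    proof -
      have "\<phi> (s + d) (gact M s m d p) = coset \<alpha> gens d (rep v * p)"
        using hact[OF m, of d p] pm by simp
      moreover have "rep v * p - p \<in> ideal_comp \<alpha> gens d"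
      proof -
        have "rep v * p - p = (rep v - 1) * p" by (simp add: algebra_simps)
        then have "poly (rep v * p - p) c = 0" using rv by simp
        then show ?thesis using I[of d] by simp
      qed
      ultimately show ?thesis using coset_eq[OF SG] by metis
    qed
    have B: "\<phi> (s + d) (gzero M (s + d)) = coset \<alpha> gens d 0"
    proof -
      have "\<phi> (s + d) (gzero M (s + d)) = \<phi> (s + d) (gsmul M (s + d) 0 (gzero M (s + d)))"
        using smul_0[OF zero_in] by simp
      also have "\<dots> = coset \<alpha> gens d 0" using hsm[OF zero_in] by simp
      finally show ?thesis .
    qed
    have inj: "inj_on (\<phi> (s + d)) (gcarr M (s + d))" using bij[of "s + d"] by (simp add: bij_betw_def)
    have "gact M s m d p = gzero M (s + d) \<longleftrightarrow> \<phi> (s + d) (gact M s m d p) = \<phi> (s + d) (gzero M (s + d))"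
      using inj_on_eq_iff[OF inj act_in[OF m] zero_in] by simp
    also have "\<dots> \<longleftrightarrow> p \<in> ideal_comp \<alpha> gens d" using A B coset_eq[of \<alpha> gens d p 0, OF SG] by simp
    finally show "gact M s m d p = gzero M (s + d) \<longleftrightarrow> p \<in> ideal_comp \<alpha> gens d" .
  qed
qed

lemma gen_from_iso:
  assumes iso: "gr_iso M (gshift s (quot_mod \<alpha> gens))"
    and I: "\<And>d. ideal_comp \<alpha> gens d = (if inS \<alpha> c d then {p. poly p c = 0} else UNIV)"
  shows "\<exists>m\<in>gcarr M s. m \<noteq> gzero M s \<and> gact M s m 0 [:-c, 1:] = gzero M s"
proof -
  obtain m where m: "m \<in> gcarr M s" and h: "\<And>d p. gact M s m d p = gzero M (s + d) \<longleftrightarrow> p \<in> ideal_comp \<alpha> gens d"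
    using ann_from_iso[OF iso I] by blast
  have I0: "ideal_comp \<alpha> gens 0 = {p. poly p c = 0}" using I[of 0] inS_0[of \<alpha> c] by simp
  have "m \<noteq> gzero M s" using h[of 0 1] act_one[OF m] I0 by simp
  moreover have "gact M s m 0 [:-c, 1:] = gzero M s" using h[of 0 "[:-c, 1:]"] I0 by simp
  ultimately show ?thesis using m by blast
qed

lemma gen_relation:
  assumes m1: "m1 \<in> gcarr M s1" "m1 \<noteq> gzero M s1" "gact M s1 m1 0 [:-c1, 1:] = gzero M s1"
    and m2: "m2 \<in> gcarr M s2" "m2 \<noteq> gzero M s2" "gact M s2 m2 0 [:-c2, 1:] = gzero M s2"
  shows "inS \<alpha> c1 (s2 - s1) \<and> c2 = c1 + of_int (s2 - s1)"
proof -
  define e where "e = s2 - s1"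
  have s2: "s2 = s1 + e" unfolding e_def by simp
  obtain p where p: "m2 = gact M s1 m1 e p" using cyclic[OF m1(1) m1(2) m2(1)] unfolding e_def by blast
  let ?u = "gact M s1 m1 e 1"
  have uin: "?u \<in> gcarr M s2" using act_in[OF m1(1)] s2 by simp
  have m2u: "m2 = gsmul M s2 (poly p c1) ?u" using p step2[OF m1(1) m1(3), of e p] s2 by simp
  have pc: "poly p c1 \<noteq> 0" using m2u m2(2) smul_0[OF uin] by auto
  have un: "?u \<noteq> gzero M s2" using m2u m2(2) smul_zero by auto
  have inS: "inS \<alpha> c1 e" using charac[OF m1(1) m1(2) m1(3), of e] un s2 by simp
  have "gact M s2 m2 0 [:-c2, 1:] = gsmul M s2 (poly p c1) (gact M s2 ?u 0 [:-c2, 1:])"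
    using m2u smul_act[OF uin] by simp
  also have "\<dots> = gsmul M s2 (poly p c1 * (c1 + of_int e - c2)) ?u"
    using u_eigen[OF m1(1) m1(3), of e "[:-c2, 1:]"] s2 mult_smul[OF uin] by simp
  finally have "gsmul M s2 (poly p c1 * (c1 + of_int e - c2)) ?u = gzero M s2" using m2(3) by simp
  then have "poly p c1 * (c1 + of_int e - c2) = 0" using smul_eq_zero[OF uin] un by blast
  then have "c2 = c1 + of_int e" using pc by simp
  then show ?thesis using inS unfolding e_def by simp
qed

end

lemma fun_pair2: "{F (q 0) (q (Suc 0)) | q. True} = {F a b | a b. True}"
proof
  show "{F (q 0) (q (Suc 0)) | q. True} \<subseteq> {F a b | a b. True}" by blast
  show "{F a b | a b. True} \<subseteq> {F (q 0) (q (Suc 0)) | q. True}"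
  proof
    fix x assume "x \<in> {F a b | a b. True}"
    then obtain a b where "x = F a b" by blast
    define qq where "qq = (\<lambda>i::nat. if i = 0 then a else b)"
    have "x = F (qq 0) (qq (Suc 0))" unfolding qq_def using \<open>x = F a b\<close> by simp
    then show "x \<in> {F (q 0) (q (Suc 0)) | q. True}" by blast
  qed
qed

lemma fun_pair3: "{F (q 0) (q (Suc 0)) (q (Suc (Suc 0))) | q. True} = {F a b c | a b c. True}"
proof
  show "{F (q 0) (q (Suc 0)) (q (Suc (Suc 0))) | q. True} \<subseteq> {F a b c | a b c. True}" by blast
  show "{F a b c | a b c. True} \<subseteq> {F (q 0) (q (Suc 0)) (q (Suc (Suc 0))) | q. True}"
  proof
    fix x assume "x \<in> {F a b c | a b c. True}"
    then obtain a b c where "x = F a b c" by blast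
    define qq where "qq = (\<lambda>i::nat. if i = 0 then a else if i = 1 then b else c)"
    have "x = F (qq 0) (qq (Suc 0)) (qq (Suc (Suc 0)))" unfolding qq_def using \<open>x = F a b c\<close> by simp
    then show "x \<in> {F (q 0) (q (Suc 0)) (q (Suc (Suc 0))) | q. True}" by blast
  qed
qed

lemma fun_pair1: "{F ((q::nat \<Rightarrow> 'a) 0) | q. True} = {F a | a. True}"
proof
  show "{F ((q::nat \<Rightarrow> 'a) 0) | q. True} \<subseteq> {F a | a. True}" by blast
  show "{F a | a. True} \<subseteq> {F ((q::nat \<Rightarrow> 'a) 0) | q. True}"
  proof
    fix x assume "x \<in> {F a | a. True}"
    then obtain a where "x = F a" by blast
    define qq where "qq = (\<lambda>i::nat. a)"
    have "x = F (qq 0)" unfolding qq_def using \<open>x = F a\<close> by simp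
    then show "x \<in> {F ((q::nat \<Rightarrow> 'a) 0) | q. True}" by (auto intro!: exI[of _ qq])
  qed
qed

lemma ic_1g: "ideal_comp \<alpha> [(0, g)] n = {A + g * q | A q. A \<in> {0}}"
proof -
  have eq: "\<And>q::nat \<Rightarrow> _. (\<Sum>i<length [(0, g)]. hprod \<alpha> (fst ([(0, g)] ! i)) (snd ([(0, g)] ! i)) (n - fst ([(0, g)] ! i)) (q i))
     = g * q 0" by (simp add: hprod_def)
  have "ideal_comp \<alpha> [(0, g)] n = {(\<lambda>a. g * a) ((q::nat \<Rightarrow> _) 0) | q. True}"
    unfolding ideal_comp_def eq by simp
  also have "\<dots> = {(\<lambda>a. g * a) a | a. True}" by (rule fun_pair1)
  finally show ?thesis by auto
qed

lemmas ic_1 = ic_1g[of _ "[:l, 1:]"] for l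

lemma ic_2g: "ideal_comp \<alpha> [(e, 1), (0, g)] n =
   {A + g * q | A q. A \<in> {shiftp e q0 * wprod \<alpha> e (n - e) | q0. True}}"
proof -
  let ?G = "[(e, 1), (0, g)]"
  have eq: "\<And>q::nat \<Rightarrow> _. (\<Sum>i<length ?G. hprod \<alpha> (fst (?G ! i)) (snd (?G ! i)) (n - fst (?G ! i)) (q i))
     = shiftp e (q 0) * wprod \<alpha> e (n - e) + g * q (Suc 0)" by (simp add: hprod_def lessThan_Suc ac_simps)
  have "ideal_comp \<alpha> ?G n =
     {(\<lambda>a b. shiftp e a * wprod \<alpha> e (n - e) + g * b) (q 0) (q (Suc 0)) | q. True}"
    unfolding ideal_comp_def eq by simp
  also have "\<dots> = {(\<lambda>a b. shiftp e a * wprod \<alpha> e (n - e) + g * b) a b | a b. True}"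
    by (rule fun_pair2)
  finally show ?thesis by auto
qed

lemmas ic_2 = ic_2g[of _ _ "[:l, 1:]"] for l

lemma ic_3g: "ideal_comp \<alpha> [(e1, 1), (e2, 1), (0, g)] n =
   {A + g * q | A q. A \<in> {shiftp e1 q0 * wprod \<alpha> e1 (n - e1) + shiftp e2 q1 * wprod \<alpha> e2 (n - e2) | q0 q1. True}}"
proof -
  let ?G = "[(e1, 1), (e2, 1), (0, g)]"
  have eq: "\<And>q::nat \<Rightarrow> _. (\<Sum>i<length ?G. hprod \<alpha> (fst (?G ! i)) (snd (?G ! i)) (n - fst (?G ! i)) (q i))
     = shiftp e1 (q 0) * wprod \<alpha> e1 (n - e1) + shiftp e2 (q (Suc 0)) * wprod \<alpha> e2 (n - e2) + g * q (Suc (Suc 0))"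
    by (simp add: hprod_def lessThan_Suc ac_simps)
  have "ideal_comp \<alpha> ?G n =
     {(\<lambda>a b c. shiftp e1 a * wprod \<alpha> e1 (n - e1) + shiftp e2 b * wprod \<alpha> e2 (n - e2) + g * c) (q 0) (q (Suc 0)) (q (Suc (Suc 0))) | q. True}"
    unfolding ideal_comp_def eq by simp
  also have "\<dots> = {(\<lambda>a b c. shiftp e1 a * wprod \<alpha> e1 (n - e1) + shiftp e2 b * wprod \<alpha> e2 (n - e2) + g * c) a b c | a b c. True}"
    by (rule fun_pair3)
  finally show ?thesis by auto
qed

lemmas ic_3 = ic_3g[of _ _ _ "[:l, 1:]"] for l

lemma core:
  fixes S :: "'k::field poly set"
  assumes S0: "0 \<in> S" and Ss: "\<And>A c. A \<in> S \<Longrightarrow> smult c A \<in> S"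
  shows "{A + [:l, 1:] * q | A q. A \<in> S} = (if \<forall>A\<in>S. poly A (-l) = 0 then {p. poly p (-l) = 0} else UNIV)"
proof (cases "\<forall>A\<in>S. poly A (-l) = 0")
  case True
  have "{A + [:l, 1:] * q | A q. A \<in> S} = {p. poly p (-l) = 0}"
  proof
    show "{A + [:l, 1:] * q | A q. A \<in> S} \<subseteq> {p. poly p (-l) = 0}" using True by auto
    show "{p. poly p (-l) = 0} \<subseteq> {A + [:l, 1:] * q | A q. A \<in> S}"
    proof
      fix p assume "p \<in> {p. poly p (-l) = 0}"
      then have "[:l, 1:] dvd p" using poly_eq_0_iff_dvd[of p "-l"] by simp
      then obtain q where "p = [:l, 1:] * q" by (elim dvdE)
      then have "p = 0 + [:l, 1:] * q" by simp
      then show "p \<in> {A + [:l, 1:] * q | A q. A \<in> S}" using S0 by blast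
    qed
  qed
  then show ?thesis unfolding if_P[OF True] .
next
  case False
  then obtain A0 where A0: "A0 \<in> S" "poly A0 (-l) \<noteq> 0" by blast
  have "{A + [:l, 1:] * q | A q. A \<in> S} = UNIV"
  proof (intro set_eqI iffI)
    fix p :: "'k poly"
    define A where "A = smult (poly p (-l) / poly A0 (-l)) A0"
    have A: "A \<in> S" unfolding A_def using Ss A0 by blast
    have "poly (p - A) (-l) = 0" unfolding A_def using A0 by simp
    then have "[:l, 1:] dvd (p - A)" using poly_eq_0_iff_dvd[of "p - A" "-l"] by simp
    then obtain q where "p - A = [:l, 1:] * q" by (elim dvdE)
    then have "p = A + [:l, 1:] * q" by (simp add: algebra_simps)
    then show "p \<in> {A + [:l, 1:] * q | A q. A \<in> S}" using A by blast
  qed simp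
  then show ?thesis unfolding if_not_P[OF False] .
qed

lemma shiftp_zero: "shiftp e 0 = 0" by (simp add: shiftp_def)

lemma shiftp_smult: "smult c (shiftp e q) = shiftp e (smult c q)"
  by (simp add: shiftp_def pcompose_smult)

lemma ic_1': "ideal_comp \<alpha> [(0, [:l, 1:])] n = {p. poly p (-l) = 0}"
  unfolding ic_1 by (subst core) auto

lemma ic_2': "ideal_comp \<alpha> [(e, 1), (0, [:l, 1:])] n =
   (if poly (wprod \<alpha> e (n - e)) (-l) = 0 then {p. poly p (-l) = 0} else UNIV)"
proof -
  let ?S = "{shiftp e q0 * wprod \<alpha> e (n - e) | q0. True}"
  have S0: "0 \<in> ?S" by (auto intro!: exI[of _ 0] simp: shiftp_def)
  have Ss: "smult c A \<in> ?S" if hA: "A \<in> ?S" for A c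
  proof -
    obtain q0 where "A = shiftp e q0 * wprod \<alpha> e (n - e)" using hA by blast
    then have "smult c A = shiftp e (smult c q0) * wprod \<alpha> e (n - e)" by (simp add: shiftp_smult[symmetric])
    then show ?thesis by blast
  qed
  have eq: "(\<forall>A\<in>?S. poly A (-l) = 0) \<longleftrightarrow> poly (wprod \<alpha> e (n - e)) (-l) = 0"
  proof
    assume "\<forall>A\<in>?S. poly A (-l) = 0"
    then have "poly (shiftp e 1 * wprod \<alpha> e (n - e)) (-l) = 0" by blast
    then show "poly (wprod \<alpha> e (n - e)) (-l) = 0" by simp
  qed auto
  show ?thesis by (simp only: ic_2g core[OF S0 Ss] eq)
qed

lemma ic_3': "ideal_comp \<alpha> [(e1, 1), (e2, 1), (0, [:l, 1:])] n =
   (if poly (wprod \<alpha> e1 (n - e1)) (-l) = 0 \<and> poly (wprod \<alpha> e2 (n - e2)) (-l) = 0 then {p. poly p (-l) = 0} else UNIV)"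
proof -
  let ?S = "{shiftp e1 q0 * wprod \<alpha> e1 (n - e1) + shiftp e2 q1 * wprod \<alpha> e2 (n - e2) | q0 q1. True}"
  have S0: "0 \<in> ?S" by (auto intro!: exI[of _ 0] simp: shiftp_def)
  have Ss: "smult c A \<in> ?S" if hA: "A \<in> ?S" for A c
  proof -
    obtain q0 q1 where "A = shiftp e1 q0 * wprod \<alpha> e1 (n - e1) + shiftp e2 q1 * wprod \<alpha> e2 (n - e2)" using hA by blast
    then have "smult c A = shiftp e1 (smult c q0) * wprod \<alpha> e1 (n - e1) + shiftp e2 (smult c q1) * wprod \<alpha> e2 (n - e2)"
      by (simp add: shiftp_smult[symmetric] smult_add_right)
    then show ?thesis by blast
  qed
  have eq: "(\<forall>A\<in>?S. poly A (-l) = 0) \<longleftrightarrow> poly (wprod \<alpha> e1 (n - e1)) (-l) = 0 \<and> poly (wprod \<alpha> e2 (n - e2)) (-l) = 0"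
  proof
    assume h: "\<forall>A\<in>?S. poly A (-l) = 0"
    have "shiftp e1 1 * wprod \<alpha> e1 (n - e1) + shiftp e2 0 * wprod \<alpha> e2 (n - e2) \<in> ?S" by blast
    then have "poly (shiftp e1 1 * wprod \<alpha> e1 (n - e1) + shiftp e2 0 * wprod \<alpha> e2 (n - e2)) (-l) = 0" using h by blast
    then have a: "poly (wprod \<alpha> e1 (n - e1)) (-l) = 0" by (simp add: shiftp_zero)
    have "shiftp e1 0 * wprod \<alpha> e1 (n - e1) + shiftp e2 1 * wprod \<alpha> e2 (n - e2) \<in> ?S" by blast
    then have "poly (shiftp e1 0 * wprod \<alpha> e1 (n - e1) + shiftp e2 1 * wprod \<alpha> e2 (n - e2)) (-l) = 0" using h by blast
    then have b: "poly (wprod \<alpha> e2 (n - e2)) (-l) = 0" by (simp add: shiftp_zero)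
    show "poly (wprod \<alpha> e1 (n - e1)) (-l) = 0 \<and> poly (wprod \<alpha> e2 (n - e2)) (-l) = 0" using a b by blast
  qed auto
  show ?thesis by (simp only: ic_3g core[OF S0 Ss] eq)
qed

lemma W_x: "poly (wprod \<alpha> 1 (d - 1)) c = (if d \<le> 0 then c * (c + \<alpha>) else 1)"
proof (cases "d \<le> 0")
  case True
  then have "{1 - min 1 (- (d - 1)) .. 1 - 1} = {0::int}" by auto
  then show ?thesis using True by (simp add: wprod_def poly_prod)
next
  case False then show ?thesis by (simp add: wprod_def)
qed

lemma W_y: "poly (wprod \<alpha> (-1) (d - -1)) c = (if 0 \<le> d then (c - 1) * (c - 1 + \<alpha>) else 1)"
proof (cases "0 \<le> d")
  case True
  then have "{- (-1) - min (- (-1)) (d - -1) + 1 .. - (-1)} = {1::int}" by auto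
  then show ?thesis using True by (simp add: wprod_def poly_prod algebra_simps)
next
  case False then show ?thesis by (simp add: wprod_def)
qed

lemma W_z1: assumes "0 < d + int a" "0 < a"
  shows "poly (wprod (of_nat a :: 'k::comm_ring_1) (- int a) (d - - int a)) 0 = 0"
proof -
  have a: "int a \<in> {int a - min (int a) (d - - int a) + 1 .. int a}" using assms by auto
  have "poly (wprod (of_nat a :: 'k) (- int a) (d - - int a)) 0 =
    (\<Prod>i\<in>{int a - min (int a) (d - - int a) + 1 .. int a}. poly (shiftp (- i) (fpoly (of_nat a))) 0)"
    using assms by (simp add: wprod_def poly_prod)
  also have "\<dots> = 0"
  proof -
    have "poly (shiftp (- int a) (fpoly (of_nat a :: 'k))) 0 = 0" by simp
    then show ?thesis by (intro prod_zero finite_atLeastAtMost_int bexI[OF _ a])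
  qed
  finally show ?thesis .
qed

lemma W_z2: assumes "d + int a \<le> 0" shows "wprod \<alpha> (- int a) (d - - int a) = 1"
  using assms by (simp add: wprod_def)

lemma of_int_Ints_neq: "(\<alpha>::'k::field_char_0) \<notin> \<int> \<Longrightarrow> of_int i + \<alpha> \<noteq> 0"
  by (metis Ints_minus Ints_of_int add_eq_0_iff)

lemma of_int_Ints_neq': "(\<alpha>::'k::field_char_0) \<notin> \<int> \<Longrightarrow> \<alpha> \<noteq> of_int i"
  by auto

context fixes \<alpha> :: "'k::field_char_0" begin

lemma IC_X0: assumes "\<alpha> = 0 \<or> \<alpha> \<notin> \<int>"
  shows "ideal_comp \<alpha> [el_x, el_zplus 0] d = (if inS \<alpha> 0 d then {p. poly p 0 = 0} else UNIV)"
proof -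
  have A: "ideal_comp \<alpha> [el_x, el_zplus 0] d = (if poly (wprod \<alpha> 1 (d - 1)) (-0) = 0 then {p. poly p (-0) = 0} else UNIV)"
    unfolding el_x_def el_zplus_def by (rule ic_2')
  have B: "inS \<alpha> 0 d \<longleftrightarrow> d \<le> 0"
  proof
    assume h: "inS \<alpha> 0 d"
    show "d \<le> 0"
    proof (rule ccontr)
      assume "\<not> d \<le> 0"
      then have "0 \<le> (0::int) \<and> 0 < d \<or> d \<le> 0 \<and> (0::int) < 0" by auto
      then have "poly (fpoly \<alpha>) (0 + of_int 0) \<noteq> 0" using h unfolding inS_def by blast
      then show False by simp
    qed
  next
    assume d: "d \<le> 0"
    show "inS \<alpha> 0 d" unfolding inS_def
    proof (intro allI impI)
      fix i :: int assume "0 \<le> i \<and> i < d \<or> d \<le> i \<and> i < 0"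
      then have i: "i < 0" using d by auto
      have "of_int i + \<alpha> \<noteq> 0"
        using assms i of_int_Ints_neq[of \<alpha> i] by auto
      then show "poly (fpoly \<alpha>) (0 + of_int i) \<noteq> 0" using i by simp
    qed
  qed
  show ?thesis unfolding A B W_x by simp
qed

lemma IC_Y0: assumes "\<forall>i::int. 0 \<le> i \<longrightarrow> 1 + of_int i + \<alpha> \<noteq> 0"
  shows "ideal_comp \<alpha> [el_y, el_zplus (-1)] d = (if inS \<alpha> 1 d then {p. poly p 1 = 0} else UNIV)"
proof -
  have "ideal_comp \<alpha> [el_y, el_zplus (-1)] d = ideal_comp \<alpha> [(-1, 1), (0, [:-1, 1:])] d"
    by (simp add: el_y_def el_ypow_def el_zplus_def)
  also have "\<dots> = (if poly (wprod \<alpha> (-1) (d - -1)) (- (-1)) = 0 then {p. poly p (- (-1)) = 0} else UNIV)"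
    by (rule ic_2')
  finally have A: "ideal_comp \<alpha> [el_y, el_zplus (-1)] d = (if poly (wprod \<alpha> (-1) (d - -1)) 1 = 0 then {p. poly p 1 = 0} else UNIV)"
    by simp
  have B: "inS \<alpha> 1 d \<longleftrightarrow> 0 \<le> d"
  proof
    assume h: "inS \<alpha> 1 d"
    show "0 \<le> d"
    proof (rule ccontr)
      assume "\<not> 0 \<le> d"
      then have "0 \<le> (-1::int) \<and> -1 < d \<or> d \<le> -1 \<and> (-1::int) < 0" by auto
      then have "poly (fpoly \<alpha>) (1 + of_int (-1)) \<noteq> 0" using h unfolding inS_def by blast
      then show False by simp
    qed
  next
    assume d: "0 \<le> d"
    show "inS \<alpha> 1 d" unfolding inS_def
    proof (intro allI impI)
      fix i :: int assume "0 \<le> i \<and> i < d \<or> d \<le> i \<and> i < 0"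
      then have i: "0 \<le> i" using d by auto
      have "1 + of_int i \<noteq> (0::'k)"
      proof
        assume "1 + of_int i = (0::'k)"
        then have "of_int (1 + i) = (of_int 0 :: 'k)" by simp
        then have "1 + i = 0" by (simp only: of_int_eq_iff)
        then show False using i by simp
      qed
      moreover have "1 + of_int i + \<alpha> \<noteq> 0" using assms i by blast
      ultimately show "poly (fpoly \<alpha>) (1 + of_int i) \<noteq> 0" by simp
    qed
  qed
  show ?thesis unfolding A B W_y by simp
qed


lemma nI1: "(\<alpha>::'k::field_char_0) \<notin> \<int> \<Longrightarrow> - \<alpha> + of_int i \<noteq> 0"
proof
  assume "\<alpha> \<notin> \<int>" "- \<alpha> + of_int i = 0"
  then have "\<alpha> = of_int i" by (simp add: algebra_simps)
  then show False using \<open>\<alpha> \<notin> \<int>\<close> by simp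
qed

lemma nI2: "(\<alpha>::'k::field_char_0) \<notin> \<int> \<Longrightarrow> 1 - \<alpha> + of_int i \<noteq> 0"
proof
  assume "\<alpha> \<notin> \<int>" "1 - \<alpha> + of_int i = 0"
  then have "\<alpha> = of_int (1 + i)" by (simp add: algebra_simps)
  then show False using \<open>\<alpha> \<notin> \<int>\<close> by simp
qed

lemma int_nz: "(i::int) \<noteq> 0 \<Longrightarrow> (of_int i :: 'k::field_char_0) \<noteq> 0" by simp

lemma IC_M: assumes "\<forall>i::int. poly (fpoly \<alpha>) (-l + of_int i) \<noteq> 0"
  shows "ideal_comp \<alpha> [el_zplus l] d = (if inS \<alpha> (-l) d then {p. poly p (-l) = 0} else UNIV)"
proof -
  have "inS \<alpha> (-l) d" unfolding inS_def using assms by blast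
  then show ?thesis unfolding el_zplus_def ic_1' by simp
qed

lemma IC_Xa: assumes nI: "\<alpha> \<notin> \<int>"
  shows "ideal_comp \<alpha> [el_x, el_zplus \<alpha>] d = (if inS \<alpha> (-\<alpha>) d then {p. poly p (-\<alpha>) = 0} else UNIV)"
proof -
  have A: "ideal_comp \<alpha> [el_x, el_zplus \<alpha>] d = (if poly (wprod \<alpha> 1 (d - 1)) (-\<alpha>) = 0 then {p. poly p (-\<alpha>) = 0} else UNIV)"
    unfolding el_x_def el_zplus_def by (rule ic_2')
  have B: "inS \<alpha> (-\<alpha>) d \<longleftrightarrow> d \<le> 0"
  proof
    assume h: "inS \<alpha> (-\<alpha>) d"
    show "d \<le> 0"
    proof (rule ccontr)
      assume "\<not> d \<le> 0"
      then have "0 \<le> (0::int) \<and> 0 < d \<or> d \<le> 0 \<and> (0::int) < 0" by auto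
      then have "poly (fpoly \<alpha>) (-\<alpha> + of_int 0) \<noteq> 0" using h unfolding inS_def by blast
      then show False by simp
    qed
  next
    assume d: "d \<le> 0"
    show "inS \<alpha> (-\<alpha>) d" unfolding inS_def
    proof (intro allI impI)
      fix i :: int assume "0 \<le> i \<and> i < d \<or> d \<le> i \<and> i < 0"
      then have i: "i < 0" using d by auto
      have "- \<alpha> + of_int i + \<alpha> \<noteq> 0" using i by simp
      then show "poly (fpoly \<alpha>) (-\<alpha> + of_int i) \<noteq> 0" using nI1[OF nI, of i] by simp
    qed
  qed
  show ?thesis unfolding A B W_x by simp
qed

lemma IC_Ya: assumes nI: "\<alpha> \<notin> \<int>"
  shows "ideal_comp \<alpha> [el_y, el_zplus (\<alpha> - 1)] d = (if inS \<alpha> (1 - \<alpha>) d then {p. poly p (1 - \<alpha>) = 0} else UNIV)"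
proof -
  have "ideal_comp \<alpha> [el_y, el_zplus (\<alpha> - 1)] d = ideal_comp \<alpha> [(-1, 1), (0, [:\<alpha> - 1, 1:])] d"
    by (simp add: el_y_def el_ypow_def el_zplus_def)
  also have "\<dots> = (if poly (wprod \<alpha> (-1) (d - -1)) (- (\<alpha> - 1)) = 0 then {p. poly p (- (\<alpha> - 1)) = 0} else UNIV)"
    by (rule ic_2')
  finally have A: "ideal_comp \<alpha> [el_y, el_zplus (\<alpha> - 1)] d = (if poly (wprod \<alpha> (-1) (d - -1)) (1 - \<alpha>) = 0 then {p. poly p (1 - \<alpha>) = 0} else UNIV)"
    by simp
  have B: "inS \<alpha> (1 - \<alpha>) d \<longleftrightarrow> 0 \<le> d"
  proof
    assume h: "inS \<alpha> (1 - \<alpha>) d"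
    show "0 \<le> d"
    proof (rule ccontr)
      assume "\<not> 0 \<le> d"
      then have "0 \<le> (-1::int) \<and> -1 < d \<or> d \<le> -1 \<and> (-1::int) < 0" by auto
      then have "poly (fpoly \<alpha>) (1 - \<alpha> + of_int (-1)) \<noteq> 0" using h unfolding inS_def by blast
      then show False by simp
    qed
  next
    assume d: "0 \<le> d"
    show "inS \<alpha> (1 - \<alpha>) d" unfolding inS_def
    proof (intro allI impI)
      fix i :: int assume "0 \<le> i \<and> i < d \<or> d \<le> i \<and> i < 0"
      then have i: "0 \<le> i" using d by auto
      have "1 - \<alpha> + of_int i + \<alpha> = of_int (1 + i)" by simp
      moreover have "(of_int (1 + i) :: 'k) \<noteq> 0" by (rule int_nz) (use i in linarith)
      ultimately show "poly (fpoly \<alpha>) (1 - \<alpha> + of_int i) \<noteq> 0" using nI2[OF nI, of i] by simp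
    qed
  qed
  show ?thesis unfolding A B W_y by simp
qed

end

lemma IC_Xpos: assumes a: "0 < a"
  shows "ideal_comp (of_nat a :: 'k::field_char_0) [el_x, el_zplus (of_nat a)] d =
     (if inS (of_nat a :: 'k) (- of_nat a) d then {p. poly p (- of_nat a) = 0} else UNIV)"
proof -
  let ?a = "of_nat a :: 'k"
  have A: "ideal_comp ?a [el_x, el_zplus ?a] d = (if poly (wprod ?a 1 (d - 1)) (- ?a) = 0 then {p. poly p (- ?a) = 0} else UNIV)"
    unfolding el_x_def el_zplus_def by (rule ic_2')
  have B: "inS ?a (- ?a) d \<longleftrightarrow> d \<le> 0"
  proof
    assume h: "inS ?a (- ?a) d"
    show "d \<le> 0"
    proof (rule ccontr)
      assume "\<not> d \<le> 0"
      then have "0 \<le> (0::int) \<and> 0 < d \<or> d \<le> 0 \<and> (0::int) < 0" by auto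
      then have "poly (fpoly ?a) (- ?a + of_int 0) \<noteq> 0" using h unfolding inS_def by blast
      then show False by simp
    qed
  next
    assume d: "d \<le> 0"
    show "inS ?a (- ?a) d" unfolding inS_def
    proof (intro allI impI)
      fix i :: int assume "0 \<le> i \<and> i < d \<or> d \<le> i \<and> i < 0"
      then have i: "i < 0" using d by auto
      have e1: "- ?a + of_int i = of_int (i - int a)" by simp
      have e2: "- ?a + of_int i + ?a = of_int i" by simp
      have "(of_int (i - int a) :: 'k) \<noteq> 0" by (rule int_nz) (use i in linarith)
      moreover have "(of_int i :: 'k) \<noteq> 0" by (rule int_nz) (use i in linarith)
      ultimately show "poly (fpoly ?a) (- ?a + of_int i) \<noteq> 0" using e1 e2 by simp
    qed
  qed
  show ?thesis
  proof (cases "d \<le> 0")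
    case True
    then have "inS ?a (- ?a) d" using B by blast
    then show ?thesis using A True by (simp add: W_x)
  next
    case False
    then have "\<not> inS ?a (- ?a) d" using B by blast
    then show ?thesis using A False by (simp add: W_x)
  qed
qed

lemma IC_Z: assumes a: "0 < a"
  shows "ideal_comp (of_nat a :: 'k::field_char_0) [el_ypow a, el_x, el_zplus 0] d =
     (if inS (of_nat a :: 'k) 0 d then {p. poly p 0 = 0} else UNIV)"
proof -
  let ?a = "of_nat a :: 'k"
  have A: "ideal_comp ?a [el_ypow a, el_x, el_zplus 0] d =
    (if poly (wprod ?a (- int a) (d - - int a)) (-0) = 0 \<and> poly (wprod ?a 1 (d - 1)) (-0) = 0 then {p. poly p (-0) = 0} else UNIV)"
    unfolding el_ypow_def el_x_def el_zplus_def by (rule ic_3')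
  have W1: "poly (wprod ?a (- int a) (d - - int a)) 0 = 0 \<longleftrightarrow> 0 < d + int a"
    using W_z1[OF _ a, of d] W_z2[of d a ?a] by (cases "0 < d + int a") auto
  have B: "inS ?a 0 d \<longleftrightarrow> 0 < d + int a \<and> d \<le> 0"
  proof
    assume h: "inS ?a 0 d"
    show "0 < d + int a \<and> d \<le> 0"
    proof (rule ccontr)
      assume "\<not> (0 < d + int a \<and> d \<le> 0)"
      then consider "0 < d" | "d + int a \<le> 0" by linarith
      then show False
      proof cases
        case 1
        then have "0 \<le> (0::int) \<and> 0 < d \<or> d \<le> 0 \<and> (0::int) < 0" by auto
        then have "poly (fpoly ?a) (0 + of_int 0) \<noteq> 0" using h unfolding inS_def by blast
        then show False by simp
      next
        case 2
        then have "0 \<le> (- int a) \<and> - int a < d \<or> d \<le> - int a \<and> (- int a) < 0" using a by auto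
        then have "poly (fpoly ?a) (0 + of_int (- int a)) \<noteq> 0" using h unfolding inS_def by blast
        then show False by simp
      qed
    qed
  next
    assume d: "0 < d + int a \<and> d \<le> 0"
    show "inS ?a 0 d" unfolding inS_def
    proof (intro allI impI)
      fix i :: int assume "0 \<le> i \<and> i < d \<or> d \<le> i \<and> i < 0"
      then have i: "i < 0" "0 < i + int a" using d by auto
      have e2: "0 + of_int i + ?a = of_int (i + int a)" by simp
      have "(of_int (i + int a) :: 'k) \<noteq> 0" by (rule int_nz) (use i in linarith)
      moreover have "(of_int i :: 'k) \<noteq> 0" by (rule int_nz) (use i in linarith)
      ultimately show "poly (fpoly ?a) (0 + of_int i) \<noteq> 0" using e2 by simp
    qed
  qed
  have W1': "poly (wprod ?a (- int a) (d - - int a)) (-0) = 0 \<longleftrightarrow> 0 < d + int a" using W1 by simp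
  have W2': "poly (wprod ?a 1 (d - 1)) (-0) = 0 \<longleftrightarrow> d \<le> 0" by (simp add: W_x)
  have C: "(poly (wprod ?a (- int a) (d - - int a)) (-0) = 0 \<and> poly (wprod ?a 1 (d - 1)) (-0) = 0) \<longleftrightarrow> inS ?a 0 d"
    using W1' W2' B by blast
  show ?thesis using A unfolding C by simp
qed

lemma gshift_gshift: "gshift n (gshift t Q) = gshift (n + t) Q"
  by (simp add: gshift_def algebra_simps)

lemma gshift_0: "gshift 0 Q = Q"
  by (cases Q) (simp add: gshift_def)

lemma inS_D: "inS \<alpha> c e \<Longrightarrow> (0 \<le> i \<and> i < e \<or> e \<le> i \<and> i < 0) \<Longrightarrow> poly (fpoly \<alpha>) (c + of_int i) \<noteq> 0"
  unfolding inS_def by blast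

lemma inS_I: "(\<And>i. (0 \<le> i \<and> i < e \<or> e \<le> i \<and> i < 0) \<Longrightarrow> poly (fpoly \<alpha>) (c + of_int i) \<noteq> 0) \<Longrightarrow> inS \<alpha> c e"
  unfolding inS_def by blast

context simple_loc begin

lemma exist_iso:
  assumes m: "m \<in> gcarr M j" "m \<noteq> gzero M j" and e: "gact M j m 0 [:-c, 1:] = gzero M j"
    and S: "inS \<alpha> c k"
    and IC: "\<And>d. ideal_comp \<alpha> gens d = (if inS \<alpha> (c + of_int k) d then {p. poly p (c + of_int k) = 0} else UNIV)"
  shows "gr_iso M (gshift (j + k) (quot_mod \<alpha> gens))"
proof -
  let ?m = "gact M j m k 1"
  have m1: "?m \<in> gcarr M (j + k)" using act_in[OF m(1)] .
  have m2: "?m \<noteq> gzero M (j + k)" using charac[OF m e] S by blast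
  have m3: "gact M (j + k) ?m 0 [:-(c + of_int k), 1:] = gzero M (j + k)" using u_eigen0[OF m(1) e] .
  have ann: "ideal_comp \<alpha> gens d = {p. gact M (j + k) ?m d p = gzero M (j + k + d)}" for d
    using ann_struct[OF m1 m2 m3, of d] IC[of d] by auto
  show ?thesis
  proof (rule iso_from_ann[OF m1])
    fix n w assume "w \<in> gcarr M n"
    then show "\<exists>p. w = gact M (j + k) ?m (n - (j + k)) p" using cyclic[OF m1 m2] by blast
  qed (rule ann)
qed

lemma uniq_rel:
  assumes i1: "gr_iso M (gshift s1 (quot_mod \<alpha> G1))"
    and IC1: "\<And>d. ideal_comp \<alpha> G1 d = (if inS \<alpha> c1 d then {p. poly p c1 = 0} else UNIV)"
    and i2: "gr_iso M (gshift s2 (quot_mod \<alpha> G2))"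
    and IC2: "\<And>d. ideal_comp \<alpha> G2 d = (if inS \<alpha> c2 d then {p. poly p c2 = 0} else UNIV)"
  shows "inS \<alpha> c1 (s2 - s1) \<and> c2 = c1 + of_int (s2 - s1)"
proof -
  obtain m1 where m1: "m1 \<in> gcarr M s1" "m1 \<noteq> gzero M s1" "gact M s1 m1 0 [:-c1, 1:] = gzero M s1"
    using gen_from_iso[OF i1 IC1] by blast
  obtain m2 where m2: "m2 \<in> gcarr M s2" "m2 \<noteq> gzero M s2" "gact M s2 m2 0 [:-c2, 1:] = gzero M s2"
    using gen_from_iso[OF i2 IC2] by blast
  show ?thesis using gen_relation[OF m1 m2] .
qed

lemma schema:
  fixes F :: "'i \<Rightarrow> ('k, 'k poly set) gmod"
  assumes rep: "\<And>i. i \<in> I \<Longrightarrow> \<exists>G. F i = gshift (sf i) (quot_mod \<alpha> G) \<and>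
        (\<forall>d. ideal_comp \<alpha> G d = (if inS \<alpha> (cf i) d then {p. poly p (cf i) = 0} else UNIV))"
    and cover: "\<And>j c. \<exists>i\<in>I. \<exists>e. inS \<alpha> c e \<and> sf i = j + e \<and> cf i = c + of_int e"
    and sep: "\<And>i1 i2. i1 \<in> I \<Longrightarrow> i2 \<in> I \<Longrightarrow> inS \<alpha> (cf i1) (sf i2 - sf i1) \<Longrightarrow>
        cf i2 = cf i1 + of_int (sf i2 - sf i1) \<Longrightarrow> i1 = i2"
  shows "\<exists>!i. i \<in> I \<and> gr_iso M (F i)"
proof -
  obtain j m where m: "m \<in> gcarr M j" "m \<noteq> gzero M j" using nonzero_ex by blast
  obtain c where e: "gact M j m 0 [:-c, 1:] = gzero M j" using eigen_ex[OF m] by blast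
  obtain i k where i: "i \<in> I" "inS \<alpha> c k" "sf i = j + k" "cf i = c + of_int k" using cover[where j=j and c=c] by blast
  obtain G where G: "F i = gshift (sf i) (quot_mod \<alpha> G)"
    "\<And>d. ideal_comp \<alpha> G d = (if inS \<alpha> (cf i) d then {p. poly p (cf i) = 0} else UNIV)"
    using rep[OF i(1)] by blast
  have iso: "gr_iso M (F i)" using exist_iso[OF m e i(2), where gens = G] G i by simp
  show ?thesis
  proof (rule ex1I[of _ i])
    show "i \<in> I \<and> gr_iso M (F i)" using i(1) iso by blast
  next
    fix i2 assume h: "i2 \<in> I \<and> gr_iso M (F i2)"
    obtain G2 where G2: "F i2 = gshift (sf i2) (quot_mod \<alpha> G2)"
      "\<And>d. ideal_comp \<alpha> G2 d = (if inS \<alpha> (cf i2) d then {p. poly p (cf i2) = 0} else UNIV)"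
      using rep[of i2] h by blast
    have "inS \<alpha> (cf i) (sf i2 - sf i) \<and> cf i2 = cf i + of_int (sf i2 - sf i)"
      using uniq_rel[of "sf i" G "cf i" "sf i2" G2 "cf i2"] iso h G G2 by simp
    then show "i2 = i" using sep[of i i2] i(1) h by auto
  qed
qed

end

lemma sep_gen: assumes "inS \<alpha> c1 e"
  shows "(0 < e \<longrightarrow> poly (fpoly \<alpha>) c1 \<noteq> 0) \<and> (e < 0 \<longrightarrow> poly (fpoly \<alpha>) (c1 - 1) \<noteq> 0)"
  using inS_D[OF assms, of 0] inS_D[OF assms, of "-1"] by auto

lemma Ints_plus_of_int: "(c::'k::field_char_0) + of_int i \<in> \<int> \<longleftrightarrow> c \<in> \<int>"
  by (metis Ints_add Ints_diff Ints_of_int add_diff_cancel_right')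

lemma nonint_nz: "(x::'k::field_char_0) \<notin> \<int> \<Longrightarrow> x \<noteq> 0" by auto

lemma minus_Ints: "- (x::'k::field_char_0) \<in> \<int> \<longleftrightarrow> x \<in> \<int>"
  by (metis Ints_minus minus_minus)

lemma idx3_cases:
  assumes "i \<in> idx3 \<alpha>"
  obtains n where "i = IX n" | n where "i = IY n" | n where "i = IXa n" | n where "i = IYa n"
    | l where "i = IM l" "l \<notin> \<int>" "l \<notin> {m + \<alpha> | m. m \<in> \<int>}"
  using assms unfolding idx3_def by (elim UnE) blast+

context simple_loc begin

lemma case1: assumes a0: "\<alpha> = 0" shows "\<exists>!i. i \<in> idx1 \<and> gr_iso M (fam1 i)"
proof -
  define sf where "sf = (\<lambda>i::'k sidx. case i of IX n \<Rightarrow> n | IY n \<Rightarrow> n + 1 | _ \<Rightarrow> (0::int))"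
  define cf where "cf = (\<lambda>i::'k sidx. case i of IX n \<Rightarrow> 0 | IY n \<Rightarrow> 1 | IM l \<Rightarrow> - l | _ \<Rightarrow> (0::'k))"
  show ?thesis
  proof (rule schema[where sf = sf and cf = cf])
    fix i :: "'k sidx" assume "i \<in> idx1"
    then consider n where "i = IX n" | n where "i = IY n" | l where "i = IM l" "l \<notin> \<int>"
      unfolding idx1_def by blast
    then show "\<exists>G. fam1 i = gshift (sf i) (quot_mod \<alpha> G) \<and>
        (\<forall>d. ideal_comp \<alpha> G d = (if inS \<alpha> (cf i) d then {p. poly p (cf i) = 0} else UNIV))"
    proof cases
      case 1
      then show ?thesis using IC_X0[of \<alpha>] a0 unfolding sf_def cf_def fam1_def X0_def
        by (intro exI[of _ "[el_x, el_zplus 0]"]) simp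
    next
      case 2
      have c: "\<forall>i::int. 0 \<le> i \<longrightarrow> 1 + of_int i + \<alpha> \<noteq> 0"
      proof (intro allI impI)
        fix i :: int assume "0 \<le> i"
        then have "(of_int (1 + i) :: 'k) \<noteq> 0" by (intro int_nz) linarith
        then show "1 + of_int i + \<alpha> \<noteq> 0" using a0 by simp
      qed
      then show ?thesis using IC_Y0[of \<alpha>] 2 a0 unfolding sf_def cf_def fam1_def Y0_def
        by (intro exI[of _ "[el_y, el_zplus (-1)]"]) (simp add: gshift_gshift)
    next
      case 3
      have c: "\<forall>i::int. poly (fpoly \<alpha>) (- l + of_int i) \<noteq> 0" using nI1[OF 3(2)] a0 by simp
      then show ?thesis using IC_M[of \<alpha> l] 3 a0 unfolding sf_def cf_def fam1_def M_lam_def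
        by (intro exI[of _ "[el_zplus l]"]) (simp add: gshift_0)
    qed
  next
    fix j :: int and c :: 'k
    show "\<exists>i\<in>idx1. \<exists>e. inS \<alpha> c e \<and> sf i = j + e \<and> cf i = c + of_int e"
    proof (cases "c \<in> \<int>")
      case True
      then obtain k where c: "c = of_int k" by (elim Ints_cases)
      show ?thesis
      proof (cases "k \<le> 0")
        case True
        have "inS \<alpha> c (- k)"
        proof (rule inS_I)
          fix i :: int assume "0 \<le> i \<and> i < - k \<or> - k \<le> i \<and> i < 0"
          then have "k + i < 0" using True by auto
          then have "(of_int (k + i) :: 'k) \<noteq> 0" by (intro int_nz) linarith
          then show "poly (fpoly \<alpha>) (c + of_int i) \<noteq> 0" using a0 c by simp
        qed
        moreover have "IX (j - k) \<in> idx1" unfolding idx1_def by blast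
        moreover have "sf (IX (j - k)) = j + - k" unfolding sf_def by simp
        moreover have "cf (IX (j - k)) = c + of_int (- k)" unfolding cf_def using c by simp
        ultimately show ?thesis by blast
      next
        case False
        have "inS \<alpha> c (1 - k)"
        proof (rule inS_I)
          fix i :: int assume "0 \<le> i \<and> i < 1 - k \<or> 1 - k \<le> i \<and> i < 0"
          then have "0 < k + i" using False by auto
          then have "(of_int (k + i) :: 'k) \<noteq> 0" by (intro int_nz) linarith
          then show "poly (fpoly \<alpha>) (c + of_int i) \<noteq> 0" using a0 c by simp
        qed
        moreover have "IY (j - k) \<in> idx1" unfolding idx1_def by blast
        moreover have "sf (IY (j - k)) = j + (1 - k)" unfolding sf_def by simp
        moreover have "cf (IY (j - k)) = c + of_int (1 - k)" unfolding cf_def using c by simp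
        ultimately show ?thesis by blast
      qed
    next
      case False
      have "inS \<alpha> c (- j)"
      proof (rule inS_I)
        fix i :: int assume "0 \<le> i \<and> i < - j \<or> - j \<le> i \<and> i < 0"
        have "c + of_int i \<noteq> 0" using False Ints_plus_of_int[of c i] nonint_nz by blast
        then show "poly (fpoly \<alpha>) (c + of_int i) \<noteq> 0" using a0 by simp
      qed
      moreover have "IM (of_int j - c) \<in> idx1"
      proof -
        have "of_int j - c \<notin> \<int>"
        proof
          assume "of_int j - c \<in> \<int>"
          then have "of_int j - (of_int j - c) \<in> \<int>" by (rule Ints_diff[OF Ints_of_int])
          then show False using False by simp
        qed
        then show ?thesis unfolding idx1_def by blast
      qed
      moreover have "sf (IM (of_int j - c)) = j + - j" unfolding sf_def by simp
      moreover have "cf (IM (of_int j - c)) = c + of_int (- j)" unfolding cf_def by simp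
      ultimately show ?thesis by blast
    qed
  next
    fix i1 i2 :: "'k sidx" assume i1: "i1 \<in> idx1" and i2: "i2 \<in> idx1"
      and S: "inS \<alpha> (cf i1) (sf i2 - sf i1)" and C: "cf i2 = cf i1 + of_int (sf i2 - sf i1)"
    note sg = sep_gen[OF S]
    from i1 consider n1 where "i1 = IX n1" | n1 where "i1 = IY n1" | l1 where "i1 = IM l1" "l1 \<notin> \<int>"
      unfolding idx1_def by blast
    then show "i1 = i2"
    proof cases
      case c1: 1
      from i2 consider n2 where "i2 = IX n2" | n2 where "i2 = IY n2" | l2 where "i2 = IM l2" "l2 \<notin> \<int>"
        unfolding idx1_def by blast
      then show ?thesis
      proof cases
        case 1 then show ?thesis using C c1 unfolding sf_def cf_def by simp
      next
        case 2 then show ?thesis using C sg c1 a0 unfolding sf_def cf_def by simp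
      next
        case 3
        then have "l2 = of_int (n1 - n1) + of_int n1" using C c1 unfolding sf_def cf_def by (simp add: algebra_simps)
        then show ?thesis using 3 c1 by simp
      qed
    next
      case c1: 2
      from i2 consider n2 where "i2 = IX n2" | n2 where "i2 = IY n2" | l2 where "i2 = IM l2" "l2 \<notin> \<int>"
        unfolding idx1_def by blast
      then show ?thesis
      proof cases
        case 1 then show ?thesis using C sg c1 a0 unfolding sf_def cf_def by simp
      next
        case 2 then show ?thesis using C c1 unfolding sf_def cf_def by simp
      next
        case 3
        then have "l2 = of_int (n1 - n1) + of_int n1" using C c1 unfolding sf_def cf_def by (simp add: algebra_simps)
        then show ?thesis using 3 c1 by simp
      qed
    next
      case c1: 3
      from i2 consider n2 where "i2 = IX n2" | n2 where "i2 = IY n2" | l2 where "i2 = IM l2" "l2 \<notin> \<int>"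
        unfolding idx1_def by blast
      then show ?thesis
      proof cases
        case 1
        then have "l1 = of_int (n2 - n2) + of_int n2" using C c1 unfolding sf_def cf_def by (simp add: algebra_simps)
        then show ?thesis using 1 c1 by simp
      next
        case 2
        then have "l1 = of_int (n2 - n2) + of_int n2" using C c1 unfolding sf_def cf_def by (simp add: algebra_simps)
        then show ?thesis using 2 c1 by simp
      next
        case 3 then show ?thesis using C c1 unfolding sf_def cf_def by simp
      qed
    qed
  qed
qed


lemma fv_nat_int: "poly (fpoly (of_nat a)) (of_int x :: 'k) = of_int x * of_int (x + int a)"
  by simp

lemma case2: assumes a: "0 < a" and a0: "\<alpha> = of_nat a" shows "\<exists>!i. i \<in> idx2 \<and> gr_iso M (fam2 a i)"
proof -
  define sf where "sf = (\<lambda>i::'k sidx. case i of IX n \<Rightarrow> n - int a | IY n \<Rightarrow> n + 1 | IZ n \<Rightarrow> n | _ \<Rightarrow> (0::int))"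
  define cf where "cf = (\<lambda>i::'k sidx. case i of IX n \<Rightarrow> - of_nat a | IY n \<Rightarrow> 1 | IZ n \<Rightarrow> 0 | IM l \<Rightarrow> - l | _ \<Rightarrow> (0::'k))"
  have fvi: "poly (fpoly \<alpha>) (of_int x) \<noteq> 0" if "x \<noteq> 0" "x + int a \<noteq> 0" for x
  proof -
    have h1: "(of_int x :: 'k) \<noteq> 0" using that(1) by (rule int_nz)
    have "(of_int (x + int a) :: 'k) \<noteq> 0" using that(2) by (rule int_nz)
    then have h2: "of_int x + (of_nat a :: 'k) \<noteq> 0" by simp
    show ?thesis using h1 h2 a0 by simp
  qed
  show ?thesis
  proof (rule schema[where sf = sf and cf = cf])
    fix i :: "'k sidx" assume "i \<in> idx2"
    then consider n where "i = IX n" | n where "i = IY n" | n where "i = IZ n" | l where "i = IM l" "l \<notin> \<int>"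
      unfolding idx2_def by blast
    then show "\<exists>G. fam2 a i = gshift (sf i) (quot_mod \<alpha> G) \<and>
        (\<forall>d. ideal_comp \<alpha> G d = (if inS \<alpha> (cf i) d then {p. poly p (cf i) = 0} else UNIV))"
    proof cases
      case 1
      then show ?thesis using IC_Xpos[where 'k='k, OF a] a0 unfolding sf_def cf_def fam2_def X_pos_def
        by (intro exI[of _ "[el_x, el_zplus (of_nat a)]"]) (simp add: gshift_gshift)
    next
      case 2
      have c: "\<forall>i::int. 0 \<le> i \<longrightarrow> 1 + of_int i + \<alpha> \<noteq> 0"
      proof (intro allI impI)
        fix i :: int assume "0 \<le> i"
        then have "(of_int (1 + i + int a) :: 'k) \<noteq> 0" by (intro int_nz) linarith
        then show "1 + of_int i + \<alpha> \<noteq> 0" using a0 by simp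
      qed
      then show ?thesis using IC_Y0[of \<alpha>] 2 a0 unfolding sf_def cf_def fam2_def Y0_def
        by (intro exI[of _ "[el_y, el_zplus (-1)]"]) (simp add: gshift_gshift)
    next
      case 3
      then show ?thesis using IC_Z[where 'k='k, OF a] a0 unfolding sf_def cf_def fam2_def Z_pos_def
        by (intro exI[of _ "[el_ypow a, el_x, el_zplus 0]"]) (simp add: gshift_gshift)
    next
      case 4
      have c: "\<forall>i::int. poly (fpoly \<alpha>) (- l + of_int i) \<noteq> 0"
      proof
        fix i :: int
        have eq: "- l + of_int i + \<alpha> = - l + of_int (i + int a)" using a0 by simp
        have x1: "- l + of_int i \<noteq> 0" by (rule nI1[OF 4(2)])
        have x2: "- l + of_int i + \<alpha> \<noteq> 0" by (subst eq) (rule nI1[OF 4(2)])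
        have "(- l + of_int i) * (- l + of_int i + \<alpha>) \<noteq> 0" using x1 x2 by (rule no_zero_divisors)
        then show "poly (fpoly \<alpha>) (- l + of_int i) \<noteq> 0" by (simp only: poly_fpoly not_False_eq_True)
      qed
      then show ?thesis using IC_M[of \<alpha> l] 4 a0 unfolding sf_def cf_def fam2_def M_lam_def
        by (intro exI[of _ "[el_zplus l]"]) (simp add: gshift_0)
    qed
  next
    fix j :: int and c :: 'k
    show "\<exists>i\<in>idx2. \<exists>e. inS \<alpha> c e \<and> sf i = j + e \<and> cf i = c + of_int e"
    proof (cases "c \<in> \<int>")
      case True
      then obtain k where c: "c = of_int k" by (elim Ints_cases)
      consider "1 \<le> k" | "- int a < k" "k \<le> 0" | "k \<le> - int a" by linarith
      then show ?thesis
      proof cases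
        case 1
        have "inS \<alpha> c (1 - k)"
        proof (rule inS_I)
          fix i :: int assume "0 \<le> i \<and> i < 1 - k \<or> 1 - k \<le> i \<and> i < 0"
          then have "0 < k + i" using 1 by auto
          then show "poly (fpoly \<alpha>) (c + of_int i) \<noteq> 0" using fvi[of "k + i"] c by simp
        qed
        moreover have "IY (j - k) \<in> idx2" unfolding idx2_def by blast
        moreover have "sf (IY (j - k)) = j + (1 - k)" unfolding sf_def by simp
        moreover have "cf (IY (j - k)) = c + of_int (1 - k)" unfolding cf_def using c by simp
        ultimately show ?thesis by blast
      next
        case 2
        have "inS \<alpha> c (- k)"
        proof (rule inS_I)
          fix i :: int assume "0 \<le> i \<and> i < - k \<or> - k \<le> i \<and> i < 0"
          then have "k + i < 0" "0 < k + i + int a" using 2 by auto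
          then show "poly (fpoly \<alpha>) (c + of_int i) \<noteq> 0" using fvi[of "k + i"] c by simp
        qed
        moreover have "IZ (j - k) \<in> idx2" unfolding idx2_def by blast
        moreover have "sf (IZ (j - k)) = j + - k" unfolding sf_def by simp
        moreover have "cf (IZ (j - k)) = c + of_int (- k)" unfolding cf_def using c by simp
        ultimately show ?thesis by blast
      next
        case 3
        have "inS \<alpha> c (- k - int a)"
        proof (rule inS_I)
          fix i :: int assume "0 \<le> i \<and> i < - k - int a \<or> - k - int a \<le> i \<and> i < 0"
          then have "k + i < 0" "k + i + int a < 0" using 3 a by auto
          then show "poly (fpoly \<alpha>) (c + of_int i) \<noteq> 0" using fvi[of "k + i"] c by simp
        qed
        moreover have "IX (j - k) \<in> idx2" unfolding idx2_def by blast
        moreover have "sf (IX (j - k)) = j + (- k - int a)" unfolding sf_def by simp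
        moreover have "cf (IX (j - k)) = c + of_int (- k - int a)" unfolding cf_def using c by simp
        ultimately show ?thesis by blast
      qed
    next
      case False
      have "inS \<alpha> c (- j)"
      proof (rule inS_I)
        fix i :: int assume "0 \<le> i \<and> i < - j \<or> - j \<le> i \<and> i < 0"
        have "c + of_int i \<noteq> 0" using False Ints_plus_of_int[of c i] nonint_nz by blast
        moreover have "c + of_int (i + int a) \<noteq> 0" using False Ints_plus_of_int[of c "i + int a"] nonint_nz by blast
        ultimately show "poly (fpoly \<alpha>) (c + of_int i) \<noteq> 0" using a0 by (simp add: add.assoc)
      qed
      moreover have "IM (of_int j - c) \<in> idx2"
      proof -
        have "of_int j - c \<notin> \<int>"
        proof
          assume "of_int j - c \<in> \<int>"
          then have "of_int j - (of_int j - c) \<in> \<int>" by (rule Ints_diff[OF Ints_of_int])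
          then show False using False by simp
        qed
        then show ?thesis unfolding idx2_def by blast
      qed
      moreover have "sf (IM (of_int j - c)) = j + - j" unfolding sf_def by simp
      moreover have "cf (IM (of_int j - c)) = c + of_int (- j)" unfolding cf_def by simp
      ultimately show ?thesis by blast
    qed
  next
    fix i1 i2 :: "'k sidx" assume i1: "i1 \<in> idx2" and i2: "i2 \<in> idx2"
      and S: "inS \<alpha> (cf i1) (sf i2 - sf i1)" and C: "cf i2 = cf i1 + of_int (sf i2 - sf i1)"
    note sg = sep_gen[OF S]
    from i1 consider n1 where "i1 = IX n1" | n1 where "i1 = IY n1" | n1 where "i1 = IZ n1" | l1 where "i1 = IM l1" "l1 \<notin> \<int>"
      unfolding idx2_def by blast
    then show "i1 = i2"
    proof cases
      case c1: 1
      from i2 consider n2 where "i2 = IX n2" | n2 where "i2 = IY n2" | n2 where "i2 = IZ n2" | l2 where "i2 = IM l2" "l2 \<notin> \<int>"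
        unfolding idx2_def by blast
      then show ?thesis
      proof cases
        case 1 then show ?thesis using C c1 unfolding sf_def cf_def by simp
      next
        case 2 then show ?thesis using C sg c1 a0 a unfolding sf_def cf_def by simp
      next
        case 3 then show ?thesis using C sg c1 a0 a unfolding sf_def cf_def by simp
      next
        case 4
        then have "l2 = of_int (n1 - int a - n1) + of_nat a" using C c1 unfolding sf_def cf_def by (simp add: algebra_simps)
        then show ?thesis using 4 c1 by simp
      qed
    next
      case c1: 2
      from i2 consider n2 where "i2 = IX n2" | n2 where "i2 = IY n2" | n2 where "i2 = IZ n2" | l2 where "i2 = IM l2" "l2 \<notin> \<int>"
        unfolding idx2_def by blast
      then show ?thesis
      proof cases
        case 1 then show ?thesis using C sg c1 a0 a unfolding sf_def cf_def by simp
      next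
        case 2 then show ?thesis using C c1 unfolding sf_def cf_def by simp
      next
        case 3 then show ?thesis using C sg c1 a0 a unfolding sf_def cf_def by simp
      next
        case 4
        then have "l2 = of_int n1" using C c1 unfolding sf_def cf_def by (simp add: algebra_simps)
        then show ?thesis using 4 c1 by simp
      qed
    next
      case c1: 3
      from i2 consider n2 where "i2 = IX n2" | n2 where "i2 = IY n2" | n2 where "i2 = IZ n2" | l2 where "i2 = IM l2" "l2 \<notin> \<int>"
        unfolding idx2_def by blast
      then show ?thesis
      proof cases
        case 1
        then have e: "sf i2 - sf i1 = - int a" using C c1 unfolding sf_def cf_def by simp
        have "(0 \<le> - int a \<and> - int a < sf i2 - sf i1) \<or> (sf i2 - sf i1 \<le> - int a \<and> - int a < 0)" using e a by simp
        from inS_D[OF S this] show ?thesis using c1 a0 unfolding cf_def by simp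
      next
        case 2 then show ?thesis using C sg c1 a0 a unfolding sf_def cf_def by simp
      next
        case 3 then show ?thesis using C c1 unfolding sf_def cf_def by simp
      next
        case 4
        then have "l2 = of_int n1" using C c1 unfolding sf_def cf_def by (simp add: algebra_simps)
        then show ?thesis using 4 c1 by simp
      qed
    next
      case c1: 4
      from i2 consider n2 where "i2 = IX n2" | n2 where "i2 = IY n2" | n2 where "i2 = IZ n2" | l2 where "i2 = IM l2" "l2 \<notin> \<int>"
        unfolding idx2_def by blast
      then show ?thesis
      proof cases
        case 1
        then have "l1 = of_int n2" using C c1 unfolding sf_def cf_def by (simp add: algebra_simps)
        then show ?thesis using c1 by simp
      next
        case 2
        then have "l1 = of_int n2" using C c1 unfolding sf_def cf_def by (simp add: algebra_simps)
        then show ?thesis using c1 by simp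
      next
        case 3
        then have "l1 = of_int n2" using C c1 unfolding sf_def cf_def by (simp add: algebra_simps)
        then show ?thesis using c1 by simp
      next
        case 4 then show ?thesis using C c1 unfolding sf_def cf_def by simp
      qed
    qed
  qed
qed


lemma case3: assumes nI: "\<alpha> \<notin> \<int>" shows "\<exists>!i. i \<in> idx3 \<alpha> \<and> gr_iso M (fam3 \<alpha> i)"
proof -
  define sf where "sf = (\<lambda>i::'k sidx. case i of IX n \<Rightarrow> n | IY n \<Rightarrow> n + 1 | IXa n \<Rightarrow> n | IYa n \<Rightarrow> n + 1 | _ \<Rightarrow> (0::int))"
  define cf where "cf = (\<lambda>i::'k sidx. case i of IX n \<Rightarrow> 0 | IY n \<Rightarrow> 1 | IXa n \<Rightarrow> - \<alpha> | IYa n \<Rightarrow> 1 - \<alpha> | IM l \<Rightarrow> - l | _ \<Rightarrow> (0::'k))"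
  have nA1: "1 + \<alpha> \<notin> \<int>" using nI Ints_plus_of_int[of \<alpha> 1] by (simp add: add.commute)
  have nA2: "- \<alpha> \<notin> \<int>" using nI minus_Ints by blast
  have nA3: "1 - \<alpha> \<notin> \<int>"
  proof
    assume "1 - \<alpha> \<in> \<int>"
    then have "1 - (1 - \<alpha>) \<in> \<int>" by (rule Ints_diff[OF Ints_1])
    then show False using nI by simp
  qed
  have idxM: "l \<notin> \<int> \<and> - l + \<alpha> \<notin> \<int>" if "IM l \<in> idx3 \<alpha>" for l
  proof -
    have "IM l \<in> {IM lam | lam. lam \<notin> \<int> \<and> lam \<notin> {m + \<alpha> | m. m \<in> \<int>}}"
      using that unfolding idx3_def by blast
    then obtain lam where lam: "IM l = IM lam" "lam \<notin> \<int>" "lam \<notin> {m + \<alpha> | m. m \<in> \<int>}" by blast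
    have l: "l \<notin> \<int>" "l \<notin> {m + \<alpha> | m. m \<in> \<int>}" using lam by simp_all
    have "- l + \<alpha> \<notin> \<int>"
    proof
      assume "- l + \<alpha> \<in> \<int>"
      then have "- (- l + \<alpha>) \<in> \<int>" by (rule Ints_minus)
      moreover have "l = - (- l + \<alpha>) + \<alpha>" by simp
      ultimately show False using l(2) by blast
    qed
    then show ?thesis using l(1) by blast
  qed
  show ?thesis
  proof (rule schema[where sf = sf and cf = cf])
    fix i :: "'k sidx" assume iI: "i \<in> idx3 \<alpha>"
    then show "\<exists>G. fam3 \<alpha> i = gshift (sf i) (quot_mod \<alpha> G) \<and>
        (\<forall>d. ideal_comp \<alpha> G d = (if inS \<alpha> (cf i) d then {p. poly p (cf i) = 0} else UNIV))"
    proof (cases rule: idx3_cases)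
      case 1
      then show ?thesis using IC_X0[of \<alpha>] nI unfolding sf_def cf_def fam3_def X0_def
        by (intro exI[of _ "[el_x, el_zplus 0]"]) simp
    next
      case 2
      have c: "\<forall>i::int. 0 \<le> i \<longrightarrow> 1 + of_int i + \<alpha> \<noteq> 0"
      proof (intro allI impI)
        fix i :: int
        have "of_int (1 + i) + \<alpha> \<noteq> 0" by (rule of_int_Ints_neq[OF nI])
        then show "1 + of_int i + \<alpha> \<noteq> 0" by simp
      qed
      then show ?thesis using IC_Y0[of \<alpha>] 2 unfolding sf_def cf_def fam3_def Y0_def
        by (intro exI[of _ "[el_y, el_zplus (-1)]"]) (simp add: gshift_gshift)
    next
      case 3
      then show ?thesis using IC_Xa[OF nI] unfolding sf_def cf_def fam3_def X_alpha_def
        by (intro exI[of _ "[el_x, el_zplus \<alpha>]"]) simp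
    next
      case 4
      then show ?thesis using IC_Ya[OF nI] unfolding sf_def cf_def fam3_def Y_alpha_def
        by (intro exI[of _ "[el_y, el_zplus (\<alpha> - 1)]"]) (simp add: gshift_gshift)
    next
      case (5 l)
      have c: "\<forall>i::int. poly (fpoly \<alpha>) (- l + of_int i) \<noteq> 0"
      proof
        fix i :: int
        have x1: "- l + of_int i \<noteq> 0" by (rule nI1[OF \<open>l \<notin> \<int>\<close>])
        have "- l + \<alpha> + of_int i \<notin> \<int>" using idxM[of l] iI 5(1) Ints_plus_of_int by blast
        then have "- l + \<alpha> + of_int i \<noteq> 0" by (rule nonint_nz)
        moreover have "- l + of_int i + \<alpha> = - l + \<alpha> + of_int i" by (simp add: algebra_simps)
        ultimately have x2: "- l + of_int i + \<alpha> \<noteq> 0" by (simp only: not_False_eq_True)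
        have "(- l + of_int i) * (- l + of_int i + \<alpha>) \<noteq> 0" using x1 x2 by (rule no_zero_divisors)
        then show "poly (fpoly \<alpha>) (- l + of_int i) \<noteq> 0" by (simp only: poly_fpoly not_False_eq_True)
      qed
      then show ?thesis using IC_M[of \<alpha> l] 5 unfolding sf_def cf_def fam3_def M_lam_def
        by (intro exI[of _ "[el_zplus l]"]) (simp add: gshift_0)
    qed
  next
    fix j :: int and c :: 'k
    show "\<exists>i\<in>idx3 \<alpha>. \<exists>e. inS \<alpha> c e \<and> sf i = j + e \<and> cf i = c + of_int e"
    proof (cases "c \<in> \<int>")
      case True
      then obtain k where c: "c = of_int k" by (elim Ints_cases)
      have fvk: "poly (fpoly \<alpha>) (c + of_int i) \<noteq> 0" if "k + i \<noteq> 0" for i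
      proof -
        have x1: "(of_int (k + i) :: 'k) \<noteq> 0" using that by (rule int_nz)
        have x2: "of_int (k + i) + \<alpha> \<noteq> 0" by (rule of_int_Ints_neq[OF nI])
        have "of_int (k + i) * (of_int (k + i) + \<alpha>) \<noteq> (0::'k)" using x1 x2 by (rule no_zero_divisors)
        then show ?thesis using c by simp
      qed
      show ?thesis
      proof (cases "k \<le> 0")
        case True
        have "inS \<alpha> c (- k)"
        proof (rule inS_I)
          fix i :: int assume "0 \<le> i \<and> i < - k \<or> - k \<le> i \<and> i < 0"
          then have "k + i \<noteq> 0" using True by auto
          then show "poly (fpoly \<alpha>) (c + of_int i) \<noteq> 0" by (rule fvk)
        qed
        moreover have "IX (j - k) \<in> idx3 \<alpha>" unfolding idx3_def by blast
        moreover have "sf (IX (j - k)) = j + - k" unfolding sf_def by simp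
        moreover have "cf (IX (j - k)) = c + of_int (- k)" unfolding cf_def using c by simp
        ultimately show ?thesis by blast
      next
        case False
        have "inS \<alpha> c (1 - k)"
        proof (rule inS_I)
          fix i :: int assume "0 \<le> i \<and> i < 1 - k \<or> 1 - k \<le> i \<and> i < 0"
          then have "k + i \<noteq> 0" using False by auto
          then show "poly (fpoly \<alpha>) (c + of_int i) \<noteq> 0" by (rule fvk)
        qed
        moreover have "IY (j - k) \<in> idx3 \<alpha>" unfolding idx3_def by blast
        moreover have "sf (IY (j - k)) = j + (1 - k)" unfolding sf_def by simp
        moreover have "cf (IY (j - k)) = c + of_int (1 - k)" unfolding cf_def using c by simp
        ultimately show ?thesis by blast
      qed
    next
      case nc: False
      show ?thesis
      proof (cases "c + \<alpha> \<in> \<int>")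
        case True
        then obtain k where c: "c + \<alpha> = of_int k" by (elim Ints_cases)
        have fvk: "poly (fpoly \<alpha>) (c + of_int i) \<noteq> 0" if "k + i \<noteq> 0" for i
        proof -
          have x1: "c + of_int i \<noteq> 0" using nc Ints_plus_of_int[of c i] nonint_nz by blast
          have E: "c + of_int i + \<alpha> = of_int (k + i)" using c by (simp add: algebra_simps)
          have N: "(of_int (k + i) :: 'k) \<noteq> 0" using that by (rule int_nz)
          have x2: "c + of_int i + \<alpha> \<noteq> 0" unfolding E by (rule N)
          have "(c + of_int i) * (c + of_int i + \<alpha>) \<noteq> 0" using x1 x2 by (rule no_zero_divisors)
          then show ?thesis by (simp only: poly_fpoly not_False_eq_True)
        qed
        show ?thesis
        proof (cases "k \<le> 0")
          case True
          have "inS \<alpha> c (- k)"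
          proof (rule inS_I)
            fix i :: int assume "0 \<le> i \<and> i < - k \<or> - k \<le> i \<and> i < 0"
            then have "k + i \<noteq> 0" using True by auto
            then show "poly (fpoly \<alpha>) (c + of_int i) \<noteq> 0" by (rule fvk)
          qed
          moreover have "IXa (j - k) \<in> idx3 \<alpha>" unfolding idx3_def by blast
          moreover have "sf (IXa (j - k)) = j + - k" unfolding sf_def by simp
          moreover have "cf (IXa (j - k)) = c + of_int (- k)" unfolding cf_def using c by (simp add: algebra_simps)
          ultimately show ?thesis by blast
        next
          case False
          have "inS \<alpha> c (1 - k)"
          proof (rule inS_I)
            fix i :: int assume "0 \<le> i \<and> i < 1 - k \<or> 1 - k \<le> i \<and> i < 0"
            then have "k + i \<noteq> 0" using False by auto
            then show "poly (fpoly \<alpha>) (c + of_int i) \<noteq> 0" by (rule fvk)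
          qed
          moreover have "IYa (j - k) \<in> idx3 \<alpha>" unfolding idx3_def by blast
          moreover have "sf (IYa (j - k)) = j + (1 - k)" unfolding sf_def by simp
          moreover have "cf (IYa (j - k)) = c + of_int (1 - k)" unfolding cf_def using c by (simp add: algebra_simps)
          ultimately show ?thesis by blast
        qed
      next
        case nca: False
        have "inS \<alpha> c (- j)"
        proof (rule inS_I)
          fix i :: int assume "0 \<le> i \<and> i < - j \<or> - j \<le> i \<and> i < 0"
          have x1: "c + of_int i \<noteq> 0" using nc Ints_plus_of_int[of c i] nonint_nz by blast
          have "c + \<alpha> + of_int i \<noteq> 0" using nca Ints_plus_of_int[of "c + \<alpha>" i] nonint_nz by blast
          then have x2: "c + of_int i + \<alpha> \<noteq> 0" by (simp add: algebra_simps)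
          have "(c + of_int i) * (c + of_int i + \<alpha>) \<noteq> 0" using x1 x2 by (rule no_zero_divisors)
          then show "poly (fpoly \<alpha>) (c + of_int i) \<noteq> 0" by (simp only: poly_fpoly not_False_eq_True)
        qed
        moreover have "IM (of_int j - c) \<in> idx3 \<alpha>"
        proof -
          have "of_int j - c \<notin> \<int>"
          proof
            assume "of_int j - c \<in> \<int>"
            then have "of_int j - (of_int j - c) \<in> \<int>" by (rule Ints_diff[OF Ints_of_int])
            then show False using nc by simp
          qed
          moreover have "of_int j - c \<notin> {m + \<alpha> | m. m \<in> \<int>}"
          proof
            assume "of_int j - c \<in> {m + \<alpha> | m. m \<in> \<int>}"
            then obtain m where m: "m \<in> \<int>" "of_int j - c = m + \<alpha>" by blast
            then have "c + \<alpha> = of_int j - m" by (simp add: algebra_simps)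
            moreover have "of_int j - m \<in> \<int>" using m(1) by (intro Ints_diff Ints_of_int)
            ultimately show False using nca by simp
          qed
          ultimately show ?thesis unfolding idx3_def by blast
        qed
        moreover have "sf (IM (of_int j - c)) = j + - j" unfolding sf_def by simp
        moreover have "cf (IM (of_int j - c)) = c + of_int (- j)" unfolding cf_def by simp
        ultimately show ?thesis by blast
      qed
    qed
  next
    fix i1 i2 :: "'k sidx" assume i1: "i1 \<in> idx3 \<alpha>" and i2: "i2 \<in> idx3 \<alpha>"
      and S: "inS \<alpha> (cf i1) (sf i2 - sf i1)" and C: "cf i2 = cf i1 + of_int (sf i2 - sf i1)"
    note sg = sep_gen[OF S]
    have cls1: "cf i2 \<in> \<int> \<longleftrightarrow> cf i1 \<in> \<int>" unfolding C by (rule Ints_plus_of_int)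
    have E2: "cf i2 + \<alpha> = (cf i1 + \<alpha>) + of_int (sf i2 - sf i1)" using C by (simp add: algebra_simps)
    have cls2: "cf i2 + \<alpha> \<in> \<int> \<longleftrightarrow> cf i1 + \<alpha> \<in> \<int>" unfolding E2 by (rule Ints_plus_of_int)
    have K: "(cf i \<in> \<int> \<longleftrightarrow> (\<exists>n. i = IX n \<or> i = IY n)) \<and> (cf i + \<alpha> \<in> \<int> \<longleftrightarrow> (\<exists>n. i = IXa n \<or> i = IYa n))"
      if "i \<in> idx3 \<alpha>" for i
    proof -
      from that show ?thesis
      proof (cases rule: idx3_cases)
        case 1 then show ?thesis using nI unfolding cf_def by simp
      next
        case 2 then show ?thesis using nA1 unfolding cf_def by (simp add: add.commute)
      next
        case 3 then show ?thesis using nA2 unfolding cf_def by simp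
      next
        case 4 then show ?thesis using nA3 unfolding cf_def by simp
      next
        case (5 l) then show ?thesis using idxM[of l] that minus_Ints[of l] unfolding cf_def by simp
      qed
    qed
    note K1 = K[OF i1] and K2 = K[OF i2]
    from i1 show "i1 = i2"
    proof (cases rule: idx3_cases)
      case c1: 1
      from i2 show ?thesis
      proof (cases rule: idx3_cases)
        case 1 then show ?thesis using C c1 unfolding sf_def cf_def by simp
      next
        case 2 then show ?thesis using C sg c1 unfolding sf_def cf_def by simp
      qed (use cls1 cls2 K1 K2 c1 in auto)
    next
      case c1: 2
      from i2 show ?thesis
      proof (cases rule: idx3_cases)
        case 1 then show ?thesis using C sg c1 unfolding sf_def cf_def by simp
      next
        case 2 then show ?thesis using C c1 unfolding sf_def cf_def by simp
      qed (use cls1 cls2 K1 K2 c1 in auto)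
    next
      case c1: 3
      from i2 show ?thesis
      proof (cases rule: idx3_cases)
        case 3 then show ?thesis using C c1 unfolding sf_def cf_def by simp
      next
        case 4 then show ?thesis using C sg c1 unfolding sf_def cf_def by simp
      qed (use cls1 cls2 K1 K2 c1 in auto)
    next
      case c1: 4
      from i2 show ?thesis
      proof (cases rule: idx3_cases)
        case 3 then show ?thesis using C sg c1 unfolding sf_def cf_def by simp
      next
        case 4 then show ?thesis using C c1 unfolding sf_def cf_def by simp
      qed (use cls1 cls2 K1 K2 c1 in auto)
    next
      case c1: 5
      from i2 show ?thesis
      proof (cases rule: idx3_cases)
        case 5 then show ?thesis using C c1 unfolding sf_def cf_def by simp
      qed (use cls1 cls2 K1 K2 c1 in auto)
    qed
  qed
qed

end

theorem lemma3p1: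
  fixes \<alpha> :: "'k::{alg_closed_field, field_char_0}"
    and M :: "('k, 'm) gmod"
  assumes "gr_simple \<alpha> M"
  shows "(\<alpha> = 0 \<longrightarrow> (\<exists>!i. i \<in> idx1 \<and> gr_iso M (fam1 i)))
       \<and> (\<forall>a::nat. 0 < a \<and> \<alpha> = of_nat a \<longrightarrow> (\<exists>!i. i \<in> idx2 \<and> gr_iso M (fam2 a i)))
       \<and> (\<alpha> \<notin> \<int> \<longrightarrow> (\<exists>!i. i \<in> idx3 \<alpha> \<and> gr_iso M (fam3 \<alpha> i)))"
proof -
  interpret simple_loc \<alpha> M
    using assms by unfold_locales (auto simp: gr_simple_def)
  show ?thesis using case1 case2 case3 by blast
qed

end
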